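(* Let $p\ge 2$ be an integer, $0\le t\le 1$ and $u>0$, and let $D=\mathrm{DASEP}(3,p,2)$ with stationary distribution $\mathrm{Pd}$. Then the following are equivalent: (i) $t=1$; (ii) for every partition $\lambda=(\lambda_1\ge\lambda_2\ge\lambda_3\ge0)$ with $\lambda_1\le p$ and exactly $2$ nonzero parts, and all $\mu,\nu\in S_3(\lambda)$, $$\frac{\Pr_\lambda(\mu)}{\Pr_\lambda(\nu)}=\frac{\mathrm{Pd}(\mu)}{\mathrm{Pd}(\nu)}.$$
   Context: For a partition $\lambda=(\lambda_1\ge\dots\ge\lambda_n\ge 0)$ of nonnegative integers, $S_n(\lambda)$ denotes the set of all distinct rearrangements of $\lambda$, viewed as words $(\mu_1,\dots,\mu_n)$ whose positions $1,\dots,n$ lie on a circle. Fix $0\le t\le 1$. ASEP($\lambda$) is the Markov chain on $S_n(\lambda)$ with transition probabilities $P_{\mu,\nu}$ defined as follows. If $\mu$ has entries $i\ne j$ in adjacent positions $k,k+1$ ($1\le k\le n-1$) and $\nu$ is obtained from $\mu$ by swapping them, then $P_{\mu,\nu}=t/n$ if $i>j$ and $P_{\mu,\nu}=1/n$ if $i<j$. If $\mu=(i,\mu_2,\dots,\mu_{n-1},j)$ with $i\ne j$ and $\nu=(j,\mu_2,\dots,\mu_{n-1},i)$, then $P_{\mu,\nu}=t/n$ if $j>i$ and $P_{\mu,\nu}=1/n$ if $i>j$. All other off-diagonal transition probabilities are $0$, and the diagonal entries are chosen so that each row sums to $1$. $\Pr_\lambda$ denotes the stationary distribution of ASEP($\lambda$).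 Fix also $u>0$. For positive integers $n,p,q$ with $n>q$, DASEP$(n,p,q)$ is the Markov chain on the set of words in $\{0,1,\dots,p\}^n$ with exactly $q$ nonzero entries (equivalently, the union of $S_n(\lambda)$ over partitions $\lambda$ with $\lambda_1\le p$ and exactly $q$ nonzero parts). Its transition probabilities are as follows. The two swap rules of ASEP apply, with probabilities $t/(3n)$ and $1/(3n)$ in place of $t/n$ and $1/n$. Replacing a single entry $i$ with $1\le i\le p-1$ by $i+1$ has probability $u/(3n)$. Replacing a single entry $i+1$ with $i\ge 1$ by $i$ has probability $1/(3n)$. All other off-diagonal transition probabilities are $0$, and the diagonal entries make each row sum to $1$. $\mathrm{Pd}$ denotes the stationary distribution of the DASEP. *)

theory Defs
  imports Complex_Main "HOL-Library.Multiset"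
begin

text \<open>Words are lists of natural numbers of length n; position k (1-based in the paper)
is index k-1 here. A finite Markov chain on a state set S is given by its off-diagonal
transition probabilities w x y (x \<noteq> y); the diagonal entry is chosen so that rows sum to 1.\<close>

definition markov_P :: "'a set \<Rightarrow> ('a \<Rightarrow> 'a \<Rightarrow> real) \<Rightarrow> 'a \<Rightarrow> 'a \<Rightarrow> real" where
  "markov_P S w x y = (if x = y then 1 - (\<Sum>z\<in>S - {x}. w x z) else w x y)"

definition is_stationary :: "'a set \<Rightarrow> ('a \<Rightarrow> 'a \<Rightarrow> real) \<Rightarrow> ('a \<Rightarrow> real) \<Rightarrow> bool" where
  "is_stationary S w \<pi> \<longleftrightarrow>
     (\<forall>x. x \<notin> S \<longrightarrow> \<pi> x = 0) \<and> (\<forall>x\<in>S. 0 \<le> \<pi> x) \<and> sum \<pi> S = 1 \<and>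
     (\<forall>y\<in>S. (\<Sum>x\<in>S. \<pi> x * markov_P S w x y) = \<pi> y)"

definition stationary_dist :: "'a set \<Rightarrow> ('a \<Rightarrow> 'a \<Rightarrow> real) \<Rightarrow> 'a \<Rightarrow> real" where
  "stationary_dist S w = (THE \<pi>. is_stationary S w \<pi>)"

definition swap_at :: "nat list \<Rightarrow> nat \<Rightarrow> nat \<Rightarrow> nat list" where
  "swap_at \<mu> i j = \<mu>[i := \<mu> ! j, j := \<mu> ! i]"

definition rearrangements :: "nat list \<Rightarrow> nat list set" where
  "rearrangements lam = {\<mu>. mset \<mu> = mset lam}"

definition is_partition :: "nat \<Rightarrow> nat list \<Rightarrow> bool" where
  "is_partition n lam \<longleftrightarrow> length lam = n \<and> sorted (rev lam)"

definition num_nonzero :: "nat list \<Rightarrow> nat" where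
  "num_nonzero \<mu> = length (filter (\<lambda>x. x \<noteq> 0) \<mu>)"

text \<open>Swap moves of the ASEP, with rates a (for the "t" moves) and b (for the "1" moves),
summed over the operations producing nu (for n \<ge> 3 at most one operation produces nu).\<close>
definition swap_weight :: "real \<Rightarrow> real \<Rightarrow> nat list \<Rightarrow> nat list \<Rightarrow> real" where
  "swap_weight a b \<mu> \<nu> =
     (let n = length \<mu> in
      (\<Sum>k\<in>{0..<n-1}. if \<mu> ! k \<noteq> \<mu> ! (k+1) \<and> \<nu> = swap_at \<mu> k (k+1)
                        then (if \<mu> ! k > \<mu> ! (k+1) then a else b) else 0)
      + (if 2 \<le> n \<and> \<mu> ! 0 \<noteq> \<mu> ! (n-1) \<and> \<nu> = swap_at \<mu> 0 (n-1)
         then (if \<mu> ! (n-1) > \<mu> ! 0 then a else b) else 0))"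

definition ASEP_w :: "real \<Rightarrow> nat list \<Rightarrow> nat list \<Rightarrow> real" where
  "ASEP_w t \<mu> \<nu> = swap_weight (t / length \<mu>) (1 / length \<mu>) \<mu> \<nu>"

definition ASEP_Pr :: "real \<Rightarrow> nat list \<Rightarrow> nat list \<Rightarrow> real" where
  "ASEP_Pr t lam = stationary_dist (rearrangements lam) (ASEP_w t)"

definition DASEP_states :: "nat \<Rightarrow> nat \<Rightarrow> nat \<Rightarrow> nat list set" where
  "DASEP_states n p q = {\<mu>. length \<mu> = n \<and> set \<mu> \<subseteq> {0..p} \<and> num_nonzero \<mu> = q}"

definition DASEP_w :: "nat \<Rightarrow> real \<Rightarrow> real \<Rightarrow> nat list \<Rightarrow> nat list \<Rightarrow> real" where
  "DASEP_w p t u \<mu> \<nu> =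
     (let n = length \<mu> in
      swap_weight (t / (3 * n)) (1 / (3 * n)) \<mu> \<nu>
      + (\<Sum>k\<in>{0..<n}. (if 1 \<le> \<mu> ! k \<and> \<mu> ! k \<le> p - 1 \<and> \<nu> = \<mu>[k := \<mu> ! k + 1]
                         then u / (3 * n) else 0)
                      + (if 2 \<le> \<mu> ! k \<and> \<nu> = \<mu>[k := \<mu> ! k - 1]
                         then 1 / (3 * n) else 0)))"

definition DASEP_Pd :: "nat \<Rightarrow> nat \<Rightarrow> nat \<Rightarrow> real \<Rightarrow> real \<Rightarrow> nat list \<Rightarrow> real" where
  "DASEP_Pd n p q t u = stationary_dist (DASEP_states n p q) (DASEP_w p t u)"

end

theory Submission
  imports Defs
begin


definition bal :: "'a set \<Rightarrow> ('a \<Rightarrow> 'a \<Rightarrow> real) \<Rightarrow> ('a \<Rightarrow> real) \<Rightarrow> bool" where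
  "bal S w \<pi> \<longleftrightarrow> (\<forall>y\<in>S. (\<Sum>x\<in>S-{y}. \<pi> x * w x y) = \<pi> y * (\<Sum>z\<in>S-{y}. w y z))"

lemma markov_sum:
  assumes "finite S" "y \<in> S"
  shows "(\<Sum>x\<in>S. \<pi> x * markov_P S w x y) = \<pi> y - \<pi> y * (\<Sum>z\<in>S-{y}. w y z) + (\<Sum>x\<in>S-{y}. \<pi> x * w x y)"
proof -
  have "(\<Sum>x\<in>S. \<pi> x * markov_P S w x y) = \<pi> y * markov_P S w y y + (\<Sum>x\<in>S-{y}. \<pi> x * markov_P S w x y)"
    using assms by (simp add: sum.remove)
  also have "(\<Sum>x\<in>S-{y}. \<pi> x * markov_P S w x y) = (\<Sum>x\<in>S-{y}. \<pi> x * w x y)"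
    by (rule sum.cong) (auto simp: markov_P_def)
  finally show ?thesis by (simp add: markov_P_def algebra_simps)
qed

lemma stat_iff:
  assumes "finite S"
  shows "is_stationary S w \<pi> \<longleftrightarrow> (\<forall>x. x \<notin> S \<longrightarrow> \<pi> x = 0) \<and> (\<forall>x\<in>S. 0 \<le> \<pi> x) \<and> sum \<pi> S = 1 \<and> bal S w \<pi>"
  using assms by (auto simp: is_stationary_def bal_def markov_sum)

definition edges :: "'a set \<Rightarrow> ('a \<Rightarrow> 'a \<Rightarrow> real) \<Rightarrow> ('a \<times> 'a) set" where
  "edges S w = {(x,y). x \<in> S \<and> y \<in> S \<and> x \<noteq> y \<and> w x y > 0}"

definition nonneg :: "'a set \<Rightarrow> ('a \<Rightarrow> 'a \<Rightarrow> real) \<Rightarrow> bool" where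
  "nonneg S w \<longleftrightarrow> (\<forall>x\<in>S. \<forall>y\<in>S. 0 \<le> w x y)"

definition connected :: "'a set \<Rightarrow> ('a \<Rightarrow> 'a \<Rightarrow> real) \<Rightarrow> bool" where
  "connected S w \<longleftrightarrow> (\<forall>x\<in>S. \<forall>y\<in>S. (x,y) \<in> (edges S w)\<^sup>*)"

lemma exists_bal:
  assumes "finite S" "S \<noteq> {}" "nonneg S w"
  shows "\<exists>\<pi>. (\<forall>x\<in>S. 0 \<le> \<pi> x) \<and> sum \<pi> S > 0 \<and> bal S w \<pi>"
  using assms
proof (induction S arbitrary: w rule: finite_ne_induct)
  case (singleton x)
  show ?case by (rule exI[of _ "\<lambda>_. 1"]) (simp add: bal_def)
next
  case (insert z F)
  define W where "W = (\<Sum>v\<in>F. w z v)"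
  have nn: "\<And>x y. x \<in> insert z F \<Longrightarrow> y \<in> insert z F \<Longrightarrow> 0 \<le> w x y"
    using insert.prems by (auto simp: nonneg_def)
  have W0: "W \<ge> 0" unfolding W_def by (rule sum_nonneg) (auto intro: nn)
  have rem: "insert z F - {z} = F" using insert.hyps by auto
  show ?case
  proof (cases "W = 0")
    case True
    have wz0: "\<And>y. y \<in> F \<Longrightarrow> w z y = 0"
      using True insert.hyps nn unfolding W_def by (subst (asm) sum_nonneg_eq_0_iff) auto
    define \<pi> where "\<pi> = (\<lambda>x. if x = z then 1 else (0::real))"
    have "bal (insert z F) w \<pi>"
      unfolding bal_def
    proof
      fix y assume y: "y \<in> insert z F"
      show "(\<Sum>x\<in>insert z F - {y}. \<pi> x * w x y) = \<pi> y * (\<Sum>z\<in>insert z F - {y}. w y z)"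
      proof (cases "y = z")
        case True
        then show ?thesis using rem \<open>W = 0\<close> insert.hyps by (auto simp: \<pi>_def W_def split: if_splits intro!: sum.neutral)
      next
        case False
        then have yF: "y \<in> F" using y by auto
        have "(\<Sum>x\<in>insert z F - {y}. \<pi> x * w x y) = (\<Sum>x\<in>insert z F - {y}. if x = z then w z y else 0)"
          by (rule sum.cong) (auto simp: \<pi>_def)
        also have "\<dots> = w z y" using False insert.hyps by (simp add: sum.delta')
        also have "\<dots> = 0" using wz0 yF by simp
        finally show ?thesis using False by (simp add: \<pi>_def)
      qed
    qed
    then show ?thesis using insert.hyps by (intro exI[of _ \<pi>]) (auto simp: \<pi>_def)
  next
    case False
    then have Wp: "W > 0" using W0 by simp
    define w' where "w' = (\<lambda>x y. w x y + w x z * w z y / W)"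
    have "nonneg F w'" unfolding nonneg_def w'_def using nn Wp
      by (auto intro!: add_nonneg_nonneg divide_nonneg_pos mult_nonneg_nonneg)
    from insert.IH[OF this] obtain \<pi>' where
      p1: "\<forall>x\<in>F. 0 \<le> \<pi>' x" and p2: "sum \<pi>' F > 0" and p3: "bal F w' \<pi>'" by blast
    define \<pi> where "\<pi> = (\<lambda>x. if x = z then (\<Sum>v\<in>F. \<pi>' v * w v z) / W else \<pi>' x)"
    have pz: "\<pi> z \<ge> 0" unfolding \<pi>_def using p1 nn Wp
      by (auto intro!: divide_nonneg_pos sum_nonneg mult_nonneg_nonneg)
    have sumeq: "sum \<pi> (insert z F) = \<pi> z + sum \<pi>' F"
      using insert.hyps by (simp add: \<pi>_def) (rule sum.cong, auto)
    have "bal (insert z F) w \<pi>"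
      unfolding bal_def
    proof
      fix y assume y: "y \<in> insert z F"
      show "(\<Sum>x\<in>insert z F - {y}. \<pi> x * w x y) = \<pi> y * (\<Sum>v\<in>insert z F - {y}. w y v)"
      proof (cases "y = z")
        case True
        have "(\<Sum>x\<in>insert z F - {y}. \<pi> x * w x y) = (\<Sum>x\<in>F. \<pi>' x * w x z)"
          using True rem insert.hyps by (simp add: \<pi>_def) (rule sum.cong, auto)
        also have "\<dots> = \<pi> z * W" using Wp by (simp add: \<pi>_def)
        finally show ?thesis using True rem W_def by simp
      next
        case False
        then have yF: "y \<in> F" using y by auto
        have e1: "insert z F - {y} = insert z (F - {y})" using False by auto
        have zn: "z \<notin> F - {y}" using insert.hyps by auto
        have fin: "finite (F - {y})" using insert.hyps by auto
        have IH: "(\<Sum>x\<in>F-{y}. \<pi>' x * w' x y) = \<pi>' y * (\<Sum>v\<in>F-{y}. w' y v)"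
          using p3 yF by (simp add: bal_def)
        have Wsplit: "W = (\<Sum>v\<in>F-{y}. w z v) + w z y"
          unfolding W_def using yF insert.hyps by (simp add: sum.remove)
        have pisplit: "(\<Sum>v\<in>F. \<pi>' v * w v z) = (\<Sum>x\<in>F-{y}. \<pi>' x * w x z) + \<pi>' y * w y z"
          using yF insert.hyps by (simp add: sum.remove)
        have L: "(\<Sum>x\<in>insert z F - {y}. \<pi> x * w x y)
              = \<pi> z * w z y + (\<Sum>x\<in>F-{y}. \<pi>' x * w x y)"
        proof -
          have "(\<Sum>x\<in>insert z F - {y}. \<pi> x * w x y) = \<pi> z * w z y + (\<Sum>x\<in>F-{y}. \<pi> x * w x y)"
            unfolding e1 using zn fin by simp
          also have "(\<Sum>x\<in>F-{y}. \<pi> x * w x y) = (\<Sum>x\<in>F-{y}. \<pi>' x * w x y)"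
            using insert.hyps by (intro sum.cong) (auto simp: \<pi>_def)
          finally show ?thesis .
        qed
        have IHL: "(\<Sum>x\<in>F-{y}. \<pi>' x * w' x y) = (\<Sum>x\<in>F-{y}. \<pi>' x * w x y) + (\<Sum>x\<in>F-{y}. \<pi>' x * w x z) * w z y / W"
        proof -
          have "(\<Sum>x\<in>F-{y}. \<pi>' x * w' x y) = (\<Sum>x\<in>F-{y}. \<pi>' x * w x y + (\<pi>' x * w x z) * (w z y / W))"
            by (rule sum.cong) (simp_all add: w'_def algebra_simps)
          also have "\<dots> = (\<Sum>x\<in>F-{y}. \<pi>' x * w x y) + (\<Sum>x\<in>F-{y}. \<pi>' x * w x z) * (w z y / W)"
            by (simp only: sum.distrib sum_distrib_right)
          finally show ?thesis by (simp add: sum_divide_distrib)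
        qed
        have IHR: "(\<Sum>v\<in>F-{y}. w' y v) = (\<Sum>v\<in>F-{y}. w y v) + w y z * (\<Sum>v\<in>F-{y}. w z v) / W"
          unfolding w'_def by (simp add: algebra_simps sum.distrib sum_distrib_left sum_divide_distrib)
        have "\<pi> z * w z y = ((\<Sum>x\<in>F-{y}. \<pi>' x * w x z) + \<pi>' y * w y z) * w z y / W"
          using pisplit by (simp add: \<pi>_def)
        then have "(\<Sum>x\<in>insert z F - {y}. \<pi> x * w x y)
           = \<pi>' y * ((\<Sum>v\<in>F-{y}. w y v) + w y z * (\<Sum>v\<in>F-{y}. w z v) / W) + \<pi>' y * w y z * w z y / W"
          using L IH IHL IHR by (simp add: algebra_simps add_divide_distrib)
        also have "\<dots> = \<pi>' y * ((\<Sum>v\<in>F-{y}. w y v) + w y z * ((\<Sum>v\<in>F-{y}. w z v) + w z y) / W)"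
          by (simp add: algebra_simps add_divide_distrib)
        also have "\<dots> = \<pi>' y * ((\<Sum>v\<in>F-{y}. w y v) + w y z)"
          using Wsplit Wp by simp
        also have "\<dots> = \<pi> y * (\<Sum>v\<in>insert z F - {y}. w y v)"
          unfolding e1 using zn fin False by (simp add: \<pi>_def algebra_simps)
        finally show ?thesis .
      qed
    qed
    moreover have "\<forall>x\<in>insert z F. 0 \<le> \<pi> x" using pz p1 by (auto simp: \<pi>_def)
    moreover have "sum \<pi> (insert z F) > 0" using sumeq pz p2 by simp
    ultimately show ?thesis by blast
  qed
qed

lemma zero_prop:
  assumes "(x,y) \<in> (edges S w)\<^sup>*" "v y = 0" "\<forall>x\<in>S. 0 \<le> v x" "bal S w v" "nonneg S w" "finite S"
  shows "v x = 0"
  using assms(1,2)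
proof (induction rule: converse_rtrancl_induct)
  case base
  then show ?case by simp
next
  case (step x x')
  then have e: "x \<in> S" "x' \<in> S" "x \<noteq> x'" "w x x' > 0" by (auto simp: edges_def)
  have vx': "v x' = 0" using step by simp
  have "(\<Sum>x''\<in>S-{x'}. v x'' * w x'' x') = 0" using assms(4) e vx' by (simp add: bal_def)
  moreover have "\<forall>x''\<in>S-{x'}. 0 \<le> v x'' * w x'' x'"
    using assms(3,5) e by (auto simp: nonneg_def)
  ultimately have "\<forall>x''\<in>S-{x'}. v x'' * w x'' x' = 0"
    using assms(6) by (subst (asm) sum_nonneg_eq_0_iff) auto
  then have "v x * w x x' = 0" using e by auto
  then show ?case using e by simp
qed

lemma pos_stat:
  assumes "finite S" "nonneg S w" "connected S w"
    "\<forall>x\<in>S. 0 \<le> \<pi> x" "sum \<pi> S = 1" "bal S w \<pi>" "x \<in> S"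
  shows "\<pi> x > 0"
proof (rule ccontr)
  assume "\<not> \<pi> x > 0"
  then have "\<pi> x = 0" using assms by force
  then have "\<forall>z\<in>S. \<pi> z = 0" using zero_prop assms unfolding connected_def by metis
  then have "sum \<pi> S = 0" by simp
  then show False using assms by simp
qed

lemma bal_lin:
  assumes "bal S w a" "bal S w b"
  shows "bal S w (\<lambda>x. a x - c * b x)"
proof -
  { fix y assume y: "y \<in> S"
    have "(\<Sum>x\<in>S-{y}. (a x - c * b x) * w x y) = (\<Sum>x\<in>S-{y}. a x * w x y) - c * (\<Sum>x\<in>S-{y}. b x * w x y)"
      by (simp add: algebra_simps sum_subtractf sum_distrib_left)
    also have "\<dots> = (a y - c * b y) * (\<Sum>z\<in>S-{y}. w y z)"
      using assms y by (simp add: bal_def algebra_simps)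
    finally have "(\<Sum>x\<in>S-{y}. (a x - c * b x) * w x y) = (a y - c * b y) * (\<Sum>z\<in>S-{y}. w y z)" . }
  then show ?thesis by (simp add: bal_def)
qed

lemma uniq_stat:
  assumes "finite S" "nonneg S w" "connected S w"
    "\<forall>x\<in>S. 0 \<le> a x" "sum a S = 1" "bal S w a"
    "\<forall>x\<in>S. 0 \<le> b x" "sum b S = 1" "bal S w b" "x \<in> S"
  shows "a x = b x"
proof -
  have ne: "S \<noteq> {}" using assms by auto
  have bp: "\<forall>x\<in>S. b x > 0" using pos_stat[OF assms(1-3) assms(7-9)] by auto
  define c where "c = Min ((\<lambda>x. a x / b x) ` S)"
  have "c \<in> (\<lambda>x. a x / b x) ` S" unfolding c_def using assms(1) ne by (intro Min_in) auto
  then obtain m where m: "m \<in> S" "c = a m / b m" by auto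
  have cle: "\<And>x. x \<in> S \<Longrightarrow> c \<le> a x / b x" unfolding c_def using assms(1) by auto
  define v where "v = (\<lambda>x. a x - c * b x)"
  have vnn: "\<forall>x\<in>S. 0 \<le> v x"
  proof
    fix x assume x: "x \<in> S"
    have "c * b x \<le> a x" using cle[OF x] bp x by (simp add: pos_le_divide_eq)
    then show "0 \<le> v x" by (simp add: v_def)
  qed
  have vm: "v m = 0" using m bp by (auto simp: v_def)
  have vb: "bal S w v" unfolding v_def by (rule bal_lin[OF assms(6,9)])
  have v0: "\<forall>z\<in>S. v z = 0"
    using zero_prop[OF _ vm vnn vb assms(2,1)] assms(3) m(1) unfolding connected_def by blast
  then have "\<forall>z\<in>S. a z = c * b z" by (simp add: v_def)
  then have "sum a S = c * sum b S" by (simp add: sum_distrib_left)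
  then have "c = 1" using assms by simp
  then show ?thesis using v0 assms(10) by (simp add: v_def)
qed

lemma stat_dist_char:
  assumes "finite S" "nonneg S w" "connected S w"
    "\<forall>x\<in>S. 0 \<le> \<pi> x" "sum \<pi> S = 1" "bal S w \<pi>" "\<forall>x. x \<notin> S \<longrightarrow> \<pi> x = 0"
  shows "stationary_dist S w = \<pi>"
  unfolding stationary_dist_def
proof (rule the_equality)
  show "is_stationary S w \<pi>" using assms by (simp add: stat_iff)
  fix \<pi>' assume "is_stationary S w \<pi>'"
  then have h: "(\<forall>x. x \<notin> S \<longrightarrow> \<pi>' x = 0) \<and> (\<forall>x\<in>S. 0 \<le> \<pi>' x) \<and> sum \<pi>' S = 1 \<and> bal S w \<pi>'"
    using assms by (simp add: stat_iff)
  show "\<pi>' = \<pi>"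
  proof
    fix x show "\<pi>' x = \<pi> x"
      using uniq_stat[OF assms(1-3), of \<pi>' \<pi> x] h assms by (cases "x \<in> S") auto
  qed
qed

lemma stat_dist_exists:
  assumes "finite S" "S \<noteq> {}" "nonneg S w" "connected S w"
  shows "is_stationary S w (stationary_dist S w) \<and> (\<forall>x\<in>S. stationary_dist S w x > 0)"
proof -
  obtain \<pi> where p: "\<forall>x\<in>S. 0 \<le> \<pi> x" "sum \<pi> S > 0" "bal S w \<pi>"
    using exists_bal[OF assms(1-3)] by blast
  define \<sigma> where "\<sigma> = (\<lambda>x. if x \<in> S then \<pi> x / sum \<pi> S else 0)"
  have s1: "\<forall>x\<in>S. 0 \<le> \<sigma> x" using p by (simp add: \<sigma>_def)
  have s2: "sum \<sigma> S = 1"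
  proof -
    have "sum \<sigma> S = (\<Sum>x\<in>S. \<pi> x / sum \<pi> S)" by (rule sum.cong) (auto simp: \<sigma>_def)
    also have "\<dots> = 1" using p(2) by (simp add: sum_divide_distrib[symmetric])
    finally show ?thesis .
  qed
  have s3: "bal S w \<sigma>"
    unfolding bal_def
  proof
    fix y assume y: "y \<in> S"
    have "(\<Sum>x\<in>S-{y}. \<sigma> x * w x y) = (\<Sum>x\<in>S-{y}. \<pi> x * w x y) / sum \<pi> S"
      by (simp add: sum_divide_distrib \<sigma>_def)
    also have "\<dots> = \<sigma> y * (\<Sum>z\<in>S-{y}. w y z)" using p(3) y by (simp add: bal_def \<sigma>_def)
    finally show "(\<Sum>x\<in>S-{y}. \<sigma> x * w x y) = \<sigma> y * (\<Sum>z\<in>S-{y}. w y z)" .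
  qed
  have s4: "\<forall>x. x \<notin> S \<longrightarrow> \<sigma> x = 0" by (simp add: \<sigma>_def)
  have eq: "stationary_dist S w = \<sigma>" by (rule stat_dist_char[OF assms(1,3,4) s1 s2 s3 s4])
  show ?thesis unfolding eq using s1 s2 s3 s4 assms pos_stat[OF assms(1,3,4) s1 s2 s3] by (simp add: stat_iff)
qed


lemma swap3:
  "swap_weight a b [x0,x1,x2] y =
     (if x0 \<noteq> x1 \<and> y = [x1,x0,x2] then (if x0 > x1 then a else b) else 0)
   + (if x1 \<noteq> x2 \<and> y = [x0,x2,x1] then (if x1 > x2 then a else b) else 0)
   + (if x0 \<noteq> x2 \<and> y = [x2,x1,x0] then (if x2 > x0 then a else b) else 0)"
  by (simp add: swap_weight_def swap_at_def Let_def numeral_2_eq_2 atLeast0LessThan lessThan_Suc)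

lemma DASEP3:
  "DASEP_w p t u [x0,x1,x2] y = swap_weight (t/9) (1/9) [x0,x1,x2] y
   + (if (1 \<le> x0 \<and> x0 \<le> p - 1) \<and> y = [Suc x0,x1,x2] then u/9 else 0)
   + (if 2 \<le> x0 \<and> y = [x0 - 1,x1,x2] then 1/9 else 0)
   + (if (1 \<le> x1 \<and> x1 \<le> p - 1) \<and> y = [x0,Suc x1,x2] then u/9 else 0)
   + (if 2 \<le> x1 \<and> y = [x0,x1 - 1,x2] then 1/9 else 0)
   + (if (1 \<le> x2 \<and> x2 \<le> p - 1) \<and> y = [x0,x1,Suc x2] then u/9 else 0)
   + (if 2 \<le> x2 \<and> y = [x0,x1,x2 - 1] then 1/9 else 0)"
  by (simp add: DASEP_w_def Let_def numeral_3_eq_3 atLeast0LessThan lessThan_Suc)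

lemma ASEP3:
  "ASEP_w t [x0,x1,x2] y = swap_weight (t/3) (1/3) [x0,x1,x2] y"
  by (simp add: ASEP_w_def)


abbreviation "DS p \<equiv> DASEP_states 3 p 2"

lemma mem3: "[x0,x1,x2] \<in> DS p \<longleftrightarrow> x0 \<le> p \<and> x1 \<le> p \<and> x2 \<le> p \<and>
   ((x0 = 0 \<and> x1 \<noteq> 0 \<and> x2 \<noteq> 0) \<or> (x0 \<noteq> 0 \<and> x1 = 0 \<and> x2 \<noteq> 0) \<or> (x0 \<noteq> 0 \<and> x1 \<noteq> 0 \<and> x2 = 0))"
  by (auto simp: DASEP_states_def num_nonzero_def)

lemma len3: "length x = 3 \<Longrightarrow> \<exists>x0 x1 x2. x = [x0,x1,x2]"
  by (cases x; cases "tl x"; cases "tl (tl x)") (auto simp: numeral_3_eq_3)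

lemma DS_form: "x \<in> DS p \<Longrightarrow> \<exists>x0 x1 x2. x = [x0,x1,x2]"
  by (auto simp: DASEP_states_def intro: len3)

lemma DS_finite: "finite (DS p)"
proof -
  have "DS p \<subseteq> {xs. set xs \<subseteq> {0..p} \<and> length xs = 3}" by (auto simp: DASEP_states_def)
  moreover have "finite {xs. set xs \<subseteq> {0..p} \<and> length xs = 3}" by (rule finite_lists_length_eq) simp
  ultimately show ?thesis by (rule finite_subset)
qed

lemma nb_sum: "finite A \<Longrightarrow> (\<Sum>y\<in>A. (if P \<and> y = N then c else 0) * (g y::real)) = (if P \<and> N \<in> A then c * g N else 0)"
proof -
  assume f: "finite A"
  have "(\<Sum>y\<in>A. (if P \<and> y = N then c else 0) * g y) = (\<Sum>y\<in>A. if y = N then (if P then c * g N else 0) else 0)"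
    by (rule sum.cong) auto
  then show ?thesis using f by (simp add: sum.delta')
qed

lemma nb_term: "(P \<Longrightarrow> N \<in> A) \<Longrightarrow> (if P \<and> N \<in> A then v else 0) = (if P then v else (0::real))"
  by auto

lemma nbD:
  assumes "[x0,x1,x2] \<in> DS p"
  shows "(\<Sum>y\<in>DS p - {[x0,x1,x2]}. DASEP_w p t u [x0,x1,x2] y * g y) =
     (if x0 \<noteq> x1 then (if x0 > x1 then t/9 else 1/9) * g [x1,x0,x2] else 0)
   + (if x1 \<noteq> x2 then (if x1 > x2 then t/9 else 1/9) * g [x0,x2,x1] else 0)
   + (if x0 \<noteq> x2 then (if x2 > x0 then t/9 else 1/9) * g [x2,x1,x0] else 0)
   + (if 1 \<le> x0 \<and> x0 \<le> p - 1 then u/9 * g [Suc x0,x1,x2] else 0)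
   + (if 2 \<le> x0 then 1/9 * g [x0 - 1,x1,x2] else 0)
   + (if 1 \<le> x1 \<and> x1 \<le> p - 1 then u/9 * g [x0,Suc x1,x2] else 0)
   + (if 2 \<le> x1 then 1/9 * g [x0,x1 - 1,x2] else 0)
   + (if 1 \<le> x2 \<and> x2 \<le> p - 1 then u/9 * g [x0,x1,Suc x2] else 0)
   + (if 2 \<le> x2 then 1/9 * g [x0,x1,x2 - 1] else 0)"
proof -
  have fin: "finite (DS p - {[x0,x1,x2]})" using DS_finite by simp
  have m1: "x0 \<noteq> x1 \<Longrightarrow> [x1,x0,x2] \<in> DS p - {[x0,x1,x2]}" using assms by (auto simp: mem3)
  have m2: "x1 \<noteq> x2 \<Longrightarrow> [x0,x2,x1] \<in> DS p - {[x0,x1,x2]}" using assms by (auto simp: mem3)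
  have m3: "x0 \<noteq> x2 \<Longrightarrow> [x2,x1,x0] \<in> DS p - {[x0,x1,x2]}" using assms by (auto simp: mem3)
  have m4: "1 \<le> x0 \<and> x0 \<le> p - 1 \<Longrightarrow> [Suc x0,x1,x2] \<in> DS p - {[x0,x1,x2]}" using assms by (auto simp: mem3)
  have m5: "2 \<le> x0 \<Longrightarrow> [x0 - 1,x1,x2] \<in> DS p - {[x0,x1,x2]}" using assms by (auto simp: mem3)
  have m6: "1 \<le> x1 \<and> x1 \<le> p - 1 \<Longrightarrow> [x0,Suc x1,x2] \<in> DS p - {[x0,x1,x2]}" using assms by (auto simp: mem3)
  have m7: "2 \<le> x1 \<Longrightarrow> [x0,x1 - 1,x2] \<in> DS p - {[x0,x1,x2]}" using assms by (auto simp: mem3)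
  have m8: "1 \<le> x2 \<and> x2 \<le> p - 1 \<Longrightarrow> [x0,x1,Suc x2] \<in> DS p - {[x0,x1,x2]}" using assms by (auto simp: mem3)
  have m9: "2 \<le> x2 \<Longrightarrow> [x0,x1,x2 - 1] \<in> DS p - {[x0,x1,x2]}" using assms by (auto simp: mem3)
  have e1: "(if x0 \<noteq> x1 \<and> [x1,x0,x2] \<in> DS p - {[x0,x1,x2]} then V else 0) = (if x0 \<noteq> x1 then V else (0::real))" for V
    using m1 by auto
  have e2: "(if x1 \<noteq> x2 \<and> [x0,x2,x1] \<in> DS p - {[x0,x1,x2]} then V else 0) = (if x1 \<noteq> x2 then V else (0::real))" for V
    using m2 by auto
  have e3: "(if x0 \<noteq> x2 \<and> [x2,x1,x0] \<in> DS p - {[x0,x1,x2]} then V else 0) = (if x0 \<noteq> x2 then V else (0::real))" for V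
    using m3 by auto
  show ?thesis
    unfolding DASEP3 swap3
    apply (simp only: distrib_right sum.distrib nb_sum[OF fin])
    by (simp only: nb_term[OF m1] nb_term[OF m2] nb_term[OF m3] nb_term[OF m4] nb_term[OF m5] nb_term[OF m6] nb_term[OF m7] nb_term[OF m8] nb_term[OF m9] e1 e2 e3)
qed


definition fs :: "nat \<Rightarrow> nat \<Rightarrow> real" where "fs a b = (if b < a then 1 else if a < b then -1 else 0)"
definition FF :: "nat list \<Rightarrow> real" where "FF xs = fs (xs!0) (xs!1) + fs (xs!1) (xs!2) + fs (xs!2) (xs!0)"
definition adj :: "nat list \<Rightarrow> bool" where
  "adj xs \<longleftrightarrow> xs!0 + xs!1 + xs!2 + 1 = 2 * max (xs!0) (max (xs!1) (xs!2))"

definition Lval :: "real \<Rightarrow> real \<Rightarrow> nat list \<Rightarrow> real" where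
  "Lval t u x = (if FF x = 1 then - (2*(1+2*t) + (if adj x then 1+u else 0)) / 9
     else if FF x = -1 then (2*(2+t) + (if adj x then 1+u else 0)) / 9 else 0)"

lemma Lcase0:
  assumes "1 \<le> a" "1 \<le> b" "a \<le> p" "b \<le> p"
  shows "(\<Sum>y\<in>DS p - {[a,b,0]}. DASEP_w p t u [a,b,0] y * (FF y - FF [a,b,0])) = Lval t u [a,b,0]"
proof -
  have m: "[a,b,0] \<in> DS p" using assms by (simp add: mem3)
  show ?thesis
    unfolding nbD[OF m]
    using assms
    by (auto simp: FF_def fs_def Lval_def adj_def max_def field_simps)
qed
lemma Lcase1:
  assumes "1 \<le> a" "1 \<le> b" "a \<le> p" "b \<le> p"
  shows "(\<Sum>y\<in>DS p - {[a,0,b]}. DASEP_w p t u [a,0,b] y * (FF y - FF [a,0,b])) = Lval t u [a,0,b]"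
proof -
  have m: "[a,0,b] \<in> DS p" using assms by (simp add: mem3)
  show ?thesis
    unfolding nbD[OF m]
    using assms
    by (auto simp: FF_def fs_def Lval_def adj_def max_def field_simps)
qed

lemma Lcase2:
  assumes "1 \<le> a" "1 \<le> b" "a \<le> p" "b \<le> p"
  shows "(\<Sum>y\<in>DS p - {[0,a,b]}. DASEP_w p t u [0,a,b] y * (FF y - FF [0,a,b])) = Lval t u [0,a,b]"
proof -
  have m: "[0,a,b] \<in> DS p" using assms by (simp add: mem3)
  show ?thesis
    unfolding nbD[OF m]
    using assms
    by (auto simp: FF_def fs_def Lval_def adj_def max_def field_simps)
qed

lemma Lformula:
  assumes "x \<in> DS p"
  shows "(\<Sum>y\<in>DS p - {x}. DASEP_w p t u x y * (FF y - FF x)) = Lval t u x"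
proof -
  obtain x0 x1 x2 where x: "x = [x0,x1,x2]" using DS_form[OF assms] by blast
  have "x0 \<le> p \<and> x1 \<le> p \<and> x2 \<le> p \<and>
   ((x0 = 0 \<and> x1 \<noteq> 0 \<and> x2 \<noteq> 0) \<or> (x0 \<noteq> 0 \<and> x1 = 0 \<and> x2 \<noteq> 0) \<or> (x0 \<noteq> 0 \<and> x1 \<noteq> 0 \<and> x2 = 0))"
    using assms x mem3 by simp
  then show ?thesis unfolding x
    using Lcase0[of x0 x1 p t u] Lcase1[of x0 x2 p t u] Lcase2[of x1 x2 p t u] by auto
qed


lemma offd:
  assumes "finite S"
  shows "(\<Sum>y\<in>S-{x}. g y) = (\<Sum>y\<in>S. if y = x then 0 else (g y::real))"
proof (cases "x \<in> S")
  case True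
  have "(\<Sum>y\<in>S. if y = x then 0 else g y) = (if x = x then 0 else g x) + (\<Sum>y\<in>S-{x}. if y = x then 0 else g y)"
    by (rule sum.remove[OF assms True])
  also have "(\<Sum>y\<in>S-{x}. if y = x then 0 else g y) = (\<Sum>y\<in>S-{x}. g y)" by (rule sum.cong) auto
  also have "(if x = x then 0 else g x) + (\<Sum>y\<in>S-{x}. g y) = (\<Sum>y\<in>S-{x}. g y)" by simp
  finally show ?thesis by simp
next
  case False
  then show ?thesis by (auto intro!: sum.cong)
qed

lemma sum_offdiag_swap:
  assumes "finite S"
  shows "(\<Sum>x\<in>S. \<Sum>y\<in>S-{x}. h x y) = (\<Sum>y\<in>S. \<Sum>x\<in>S-{y}. (h x y :: real))"
proof -
  have "(\<Sum>x\<in>S. \<Sum>y\<in>S-{x}. h x y) = (\<Sum>x\<in>S. \<Sum>y\<in>S. if y = x then 0 else h x y)"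
    using assms by (simp add: offd)
  also have "\<dots> = (\<Sum>y\<in>S. \<Sum>x\<in>S. if y = x then 0 else h x y)" by (rule sum.swap)
  also have "\<dots> = (\<Sum>y\<in>S. \<Sum>x\<in>S. if x = y then 0 else h x y)" by (intro sum.cong refl) auto
  also have "\<dots> = (\<Sum>y\<in>S. \<Sum>x\<in>S-{y}. h x y)"
    using assms by (simp add: offd)
  finally show ?thesis .
qed

lemma stat_functional:
  assumes "finite S" "bal S w \<pi>"
  shows "(\<Sum>x\<in>S. \<pi> x * (\<Sum>y\<in>S-{x}. w x y * (f y - f x))) = 0"
proof -
  have "(\<Sum>x\<in>S. \<pi> x * (\<Sum>y\<in>S-{x}. w x y * (f y - f x)))
      = (\<Sum>x\<in>S. \<Sum>y\<in>S-{x}. \<pi> x * w x y * f y) - (\<Sum>x\<in>S. \<pi> x * f x * (\<Sum>y\<in>S-{x}. w x y))"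
    by (simp add: sum_subtractf[symmetric] sum_distrib_left algebra_simps)
  also have "(\<Sum>x\<in>S. \<Sum>y\<in>S-{x}. \<pi> x * w x y * f y) = (\<Sum>y\<in>S. \<Sum>x\<in>S-{y}. \<pi> x * w x y * f y)"
    by (rule sum_offdiag_swap[OF assms(1)])
  also have "\<dots> = (\<Sum>y\<in>S. f y * (\<Sum>x\<in>S-{y}. \<pi> x * w x y))"
    by (simp add: sum_distrib_left algebra_simps)
  also have "\<dots> = (\<Sum>y\<in>S. f y * (\<pi> y * (\<Sum>z\<in>S-{y}. w y z)))"
    using assms(2) by (intro sum.cong refl) (simp add: bal_def)
  finally show ?thesis by (simp add: algebra_simps)
qed

lemma rev_DS: "x \<in> DS p \<Longrightarrow> rev x \<in> DS p"
  by (auto simp: DASEP_states_def num_nonzero_def rev_filter[symmetric])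

lemma FF_rev: "x \<in> DS p \<Longrightarrow> FF (rev x) = - FF x"
  using DS_form[of x p] by (auto simp: FF_def fs_def)

lemma adj_rev: "x \<in> DS p \<Longrightarrow> adj (rev x) = adj x"
  using DS_form[of x p] by (auto simp: adj_def max_def)

lemma contra:
  assumes "2 \<le> p" "0 \<le> t" "t < 1" "0 < u"
    and b: "bal (DS p) (DASEP_w p t u) \<pi>" and pos: "\<forall>x\<in>DS p. \<pi> x > 0"
    and rel: "\<forall>x\<in>DS p. FF x = 1 \<longrightarrow> \<pi> (rev x) = (1 + 2*t) / (2 + t) * \<pi> x"
  shows False
proof -
  let ?S = "DS p"
  define r where "r = (1 + 2*t) / (2 + t)"
  define A where "A = {x\<in>?S. FF x = 1}"
  define B where "B = {x\<in>?S. FF x = -1}"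
  have fin: "finite ?S" by (rule DS_finite)
  have finA: "finite A" "finite B" using fin by (auto simp: A_def B_def)
  have "(\<Sum>x\<in>?S. \<pi> x * (\<Sum>y\<in>?S-{x}. DASEP_w p t u x y * (FF y - FF x))) = 0"
    by (rule stat_functional[OF fin b])
  then have z: "(\<Sum>x\<in>?S. \<pi> x * Lval t u x) = 0"
    by (simp add: Lformula)
  have "(\<Sum>x\<in>?S. \<pi> x * Lval t u x) = (\<Sum>x\<in>?S. (if FF x = 1 then \<pi> x * Lval t u x else 0) + (if FF x = -1 then \<pi> x * Lval t u x else 0))"
    by (intro sum.cong refl) (auto simp: Lval_def)
  also have "\<dots> = (\<Sum>x\<in>A. \<pi> x * Lval t u x) + (\<Sum>x\<in>B. \<pi> x * Lval t u x)"
    using fin by (simp add: sum.distrib sum.inter_filter A_def B_def)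
  also have "B = rev ` A"
  proof
    show "B \<subseteq> rev ` A"
    proof
      fix x assume "x \<in> B"
      then have "rev x \<in> A" "x = rev (rev x)" using rev_DS FF_rev by (auto simp: A_def B_def)
      then show "x \<in> rev ` A" by blast
    qed
    show "rev ` A \<subseteq> B" using rev_DS FF_rev by (auto simp: A_def B_def)
  qed
  also have "(\<Sum>x\<in>rev ` A. \<pi> x * Lval t u x) = (\<Sum>x\<in>A. \<pi> (rev x) * Lval t u (rev x))"
    by (subst sum.reindex) (auto intro: inj_onI)
  finally have "(\<Sum>x\<in>A. \<pi> x * Lval t u x + \<pi> (rev x) * Lval t u (rev x)) = 0"
    using z by (simp add: sum.distrib)
  also have "(\<Sum>x\<in>A. \<pi> x * Lval t u x + \<pi> (rev x) * Lval t u (rev x))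
     = (\<Sum>x\<in>A. \<pi> x * (r - 1) * (if adj x then 1 + u else 0) / 9)"
  proof (intro sum.cong refl)
    fix x assume x: "x \<in> A"
    then have xs: "x \<in> ?S" "FF x = 1" by (auto simp: A_def)
    have pr: "\<pi> (rev x) = r * \<pi> x" using rel xs by (simp add: r_def)
    have rr: "r * (2 + t) = 1 + 2*t" using assms(2) by (simp add: r_def)
    have L1: "Lval t u x = - (2*(1+2*t) + (if adj x then 1+u else 0)) / 9" using xs by (simp add: Lval_def)
    have L2: "Lval t u (rev x) = (2*(2+t) + (if adj x then 1+u else 0)) / 9"
      using xs FF_rev[of x p] adj_rev[of x p] by (simp add: Lval_def)
    show "\<pi> x * Lval t u x + \<pi> (rev x) * Lval t u (rev x) = \<pi> x * (r - 1) * (if adj x then 1 + u else 0) / 9"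
      unfolding L1 L2 pr using rr
      apply (simp add: field_simps)
      apply (drule arg_cong[where f="\<lambda>z. z * (\<pi> x * 162)"])
      apply (simp add: algebra_simps)
      done
  qed
  finally have s0: "(\<Sum>x\<in>A. \<pi> x * (r - 1) * (if adj x then 1 + u else 0) / 9) = 0" .
  have rneg: "r - 1 < 0" using assms(2,3) by (simp add: r_def)
  have x0: "[2,1,0] \<in> A" using assms(1) by (simp add: A_def mem3 FF_def fs_def)
  have "0 < (\<Sum>x\<in>A. - (\<pi> x * (r - 1) * (if adj x then 1 + u else 0) / 9))"
  proof (rule sum_pos2[OF finA(1) x0])
    show "0 < - (\<pi> [2,1,0] * (r - 1) * (if adj [2,1,0] then 1 + u else 0) / 9)"
    proof -
      have "\<pi> [2,1,0] > 0" using pos x0 by (simp add: A_def)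
      then have "\<pi> [2,1,0] * (r - 1) * (1 + u) < 0" using rneg assms(4) by (intro mult_neg_pos mult_pos_neg) auto
      then show ?thesis by (simp add: adj_def)
    qed
    show "0 \<le> - (\<pi> i * (r - 1) * (if adj i then 1 + u else 0) / 9)" if i: "i \<in> A" for i
    proof -
      have "\<pi> i * (r - 1) \<le> 0" using pos i rneg by (intro mult_nonneg_nonpos) (auto simp: A_def less_imp_le)
      moreover have "0 \<le> 1 + u" using assms(4) by simp
      ultimately have "\<pi> i * (r - 1) * (1 + u) \<le> 0" by (rule mult_nonpos_nonneg)
      then show "0 \<le> - (\<pi> i * (r - 1) * (if adj i then 1 + u else 0) / 9)" by auto
    qed
  qed
  then show False using s0 by (simp add: sum_negf)
qed


lemma mset3: "mset \<mu> = mset [a,b,c] \<longleftrightarrow> \<mu> \<in> {[a,b,c],[a,c,b],[b,a,c],[b,c,a],[c,a,b],[c,b,a]}"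
proof
  assume h: "mset \<mu> = mset [a,b,c]"
  have "length \<mu> = size (mset [a,b,c])" by (metis h size_mset)
  then have "length \<mu> = 3" by simp
  then obtain x y z where m: "\<mu> = [x,y,z]" using len3 by blast
  show "\<mu> \<in> {[a,b,c],[a,c,b],[b,a,c],[b,c,a],[c,a,b],[c,b,a]}"
    using h unfolding m by (auto simp: add_eq_conv_ex add_mset_commute)
next
  assume "\<mu> \<in> {[a,b,c],[a,c,b],[b,a,c],[b,c,a],[c,a,b],[c,b,a]}"
  then show "mset \<mu> = mset [a,b,c]" by (auto simp: add_mset_commute)
qed


lemma norm_bal:
  assumes "finite S" "nonneg S w" "connected S w" "\<forall>x\<in>S. \<pi> x > 0" "bal S w \<pi>" "S \<noteq> {}"
  shows "stationary_dist S w = (\<lambda>x. if x \<in> S then \<pi> x / sum \<pi> S else 0)"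
proof -
  have ne: "S \<noteq> {}" using assms(6) .
  then have sp: "sum \<pi> S > 0" using assms(1,4) by (simp add: sum_pos)
  show ?thesis
  proof (rule stat_dist_char[OF assms(1-3)])
    show "\<forall>x\<in>S. 0 \<le> (if x \<in> S then \<pi> x / sum \<pi> S else 0)" using assms(4) sp by auto
    have "(\<Sum>x\<in>S. if x \<in> S then \<pi> x / sum \<pi> S else 0) = (\<Sum>x\<in>S. \<pi> x / sum \<pi> S)" by simp
    also have "\<dots> = 1" using sp by (simp add: sum_divide_distrib[symmetric])
    finally show "(\<Sum>x\<in>S. if x \<in> S then \<pi> x / sum \<pi> S else 0) = 1" .
    show "\<forall>x. x \<notin> S \<longrightarrow> (if x \<in> S then \<pi> x / sum \<pi> S else 0) = 0" by simp
    show "bal S w (\<lambda>x. if x \<in> S then \<pi> x / sum \<pi> S else 0)"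
      unfolding bal_def
    proof
      fix y assume y: "y \<in> S"
      have "(\<Sum>x\<in>S-{y}. (if x \<in> S then \<pi> x / sum \<pi> S else 0) * w x y) = (\<Sum>x\<in>S-{y}. \<pi> x * w x y) / sum \<pi> S"
        by (simp add: sum_divide_distrib)
      also have "\<dots> = (if y \<in> S then \<pi> y / sum \<pi> S else 0) * (\<Sum>z\<in>S-{y}. w y z)"
        using assms(5) y by (simp add: bal_def)
      finally show "(\<Sum>x\<in>S-{y}. (if x \<in> S then \<pi> x / sum \<pi> S else 0) * w x y) = (if y \<in> S then \<pi> y / sum \<pi> S else 0) * (\<Sum>z\<in>S-{y}. w y z)" .
    qed
  qed
qed

lemma cyc_reach:
  assumes "\<forall>i<n. (c i, c (Suc i mod n)) \<in> E" "i < n"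
  shows "(c i, c ((i + k) mod n)) \<in> E\<^sup>*"
proof (induction k)
  case 0
  then show ?case using assms by simp
next
  case (Suc k)
  have "(i + Suc k) mod n = Suc ((i + k) mod n) mod n" by (simp add: mod_Suc_eq)
  moreover have "(c ((i + k) mod n), c (Suc ((i + k) mod n) mod n)) \<in> E"
    using assms by (metis mod_less_divisor gr_implies_not0 neq0_conv)
  ultimately show ?case using Suc by (metis rtrancl_into_rtrancl)
qed

lemma cyc_conn:
  assumes "\<forall>i<n. (c i, c (Suc i mod n)) \<in> E"
  shows "\<forall>x\<in>c ` {..<n}. \<forall>y\<in>c ` {..<n}. (x,y) \<in> E\<^sup>*"
proof (intro ballI)
  fix x y assume "x \<in> c ` {..<n}" "y \<in> c ` {..<n}"
  then obtain i j where ij: "i < n" "j < n" "x = c i" "y = c j" by auto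
  have "(i + (n - i + j)) mod n = j" using ij by simp
  then show "(x,y) \<in> E\<^sup>*" using cyc_reach[OF assms ij(1), of "n - i + j"] ij by simp
qed

definition S6 :: "nat \<Rightarrow> nat \<Rightarrow> nat list set" where
  "S6 a b = {[a,b,0],[0,b,a],[b,0,a],[b,a,0],[0,a,b],[a,0,b]}"

lemma rearr6: "rearrangements [a,b,0] = S6 a b"
  unfolding rearrangements_def S6_def mset3 by auto

definition piA :: "real \<Rightarrow> nat \<Rightarrow> nat \<Rightarrow> nat list \<Rightarrow> real" where
  "piA t a b x = (if x \<in> {[a,b,0],[b,0,a],[0,a,b]} then 2 + t else 1 + 2*t)"

lemma asep_bal6:
  assumes "b < a" "1 \<le> b" "0 \<le> t"
  shows "bal (S6 a b) (ASEP_w t) (piA t a b)"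
  using assms unfolding bal_def S6_def
  by (simp add: sum_diff1 ASEP3 swap3 piA_def field_simps)

lemma edgeI: "x \<in> S \<Longrightarrow> y \<in> S \<Longrightarrow> x \<noteq> y \<Longrightarrow> c \<le> w x y \<Longrightarrow> 0 < c \<Longrightarrow> (x,y) \<in> edges S w"
  by (auto simp: edges_def)

lemma asep_nonneg: "0 \<le> t \<Longrightarrow> length x = 3 \<Longrightarrow> 0 \<le> ASEP_w t x y"
  by (auto simp: ASEP3 swap3 dest!: len3 intro!: add_nonneg_nonneg)

lemma S6_len: "x \<in> S6 a b \<Longrightarrow> length x = 3"
  by (auto simp: S6_def)

lemma le3: "0 \<le> a1 \<Longrightarrow> 0 \<le> a2 \<Longrightarrow> 0 \<le> a3 \<Longrightarrow> a1 \<le> a1+a2+(a3::real) \<and> a2 \<le> a1+a2+a3 \<and> a3 \<le> a1+a2+a3"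
  by linarith

lemma aw_s1: "0 \<le> t \<Longrightarrow> x0 < x1 \<Longrightarrow> 1/3 \<le> ASEP_w t [x0,x1,x2] [x1,x0,x2]"
  unfolding ASEP3 swap3 using le3[of "(if x0 \<noteq> x1 \<and> [x1,x0,x2] = [x1,x0,x2] then (if x0 > x1 then t/3 else 1/3) else 0)"
     "(if x1 \<noteq> x2 \<and> [x1,x0,x2] = [x0,x2,x1] then (if x1 > x2 then t/3 else 1/3) else 0)"
     "(if x0 \<noteq> x2 \<and> [x1,x0,x2] = [x2,x1,x0] then (if x2 > x0 then t/3 else 1/3) else 0)"] by simp
lemma aw_s2: "0 \<le> t \<Longrightarrow> x1 < x2 \<Longrightarrow> 1/3 \<le> ASEP_w t [x0,x1,x2] [x0,x2,x1]"
  unfolding ASEP3 swap3 using le3[of "(if x0 \<noteq> x1 \<and> [x0,x2,x1] = [x1,x0,x2] then (if x0 > x1 then t/3 else 1/3) else 0)"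
     "(if x1 \<noteq> x2 \<and> [x0,x2,x1] = [x0,x2,x1] then (if x1 > x2 then t/3 else 1/3) else 0)"
     "(if x0 \<noteq> x2 \<and> [x0,x2,x1] = [x2,x1,x0] then (if x2 > x0 then t/3 else 1/3) else 0)"] by simp
lemma aw_s3: "0 \<le> t \<Longrightarrow> x2 < x0 \<Longrightarrow> 1/3 \<le> ASEP_w t [x0,x1,x2] [x2,x1,x0]"
  unfolding ASEP3 swap3 using le3[of "(if x0 \<noteq> x1 \<and> [x2,x1,x0] = [x1,x0,x2] then (if x0 > x1 then t/3 else 1/3) else 0)"
     "(if x1 \<noteq> x2 \<and> [x2,x1,x0] = [x0,x2,x1] then (if x1 > x2 then t/3 else 1/3) else 0)"
     "(if x0 \<noteq> x2 \<and> [x2,x1,x0] = [x2,x1,x0] then (if x2 > x0 then t/3 else 1/3) else 0)"] by simp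

lemma asep_conn6:
  assumes "b < a" "1 \<le> b" "0 \<le> t"
  shows "connected (S6 a b) (ASEP_w t)"
proof -
  define cs where "cs = [[a,b,0],[0,b,a],[b,0,a],[b,a,0],[0,a,b],[a,0,b]]"
  let ?E = "edges (S6 a b) (ASEP_w t)"
  have S: "S6 a b = (!) cs ` {..<6}"
  proof -
    have "{..<6::nat} = {0,1,2,3,4,5}" by auto
    then show ?thesis by (simp add: S6_def cs_def)
  qed
  have e1: "([a,b,0],[0,b,a]) \<in> ?E" by (rule edgeI[where w="ASEP_w t", OF _ _ _ aw_s3]) (use assms in \<open>auto simp: S6_def\<close>)
  have e2: "([0,b,a],[b,0,a]) \<in> ?E" by (rule edgeI[where w="ASEP_w t", OF _ _ _ aw_s1]) (use assms in \<open>auto simp: S6_def\<close>)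
  have e3: "([b,0,a],[b,a,0]) \<in> ?E" by (rule edgeI[where w="ASEP_w t", OF _ _ _ aw_s2]) (use assms in \<open>auto simp: S6_def\<close>)
  have e4: "([b,a,0],[0,a,b]) \<in> ?E" by (rule edgeI[where w="ASEP_w t", OF _ _ _ aw_s3]) (use assms in \<open>auto simp: S6_def\<close>)
  have e5: "([0,a,b],[a,0,b]) \<in> ?E" by (rule edgeI[where w="ASEP_w t", OF _ _ _ aw_s1]) (use assms in \<open>auto simp: S6_def\<close>)
  have e6: "([a,0,b],[a,b,0]) \<in> ?E" by (rule edgeI[where w="ASEP_w t", OF _ _ _ aw_s2]) (use assms in \<open>auto simp: S6_def\<close>)
  have "\<forall>i<6. ((!) cs i, (!) cs (Suc i mod 6)) \<in> ?E"
  proof (intro allI impI)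
    fix i :: nat assume "i < 6"
    then have "i = 0 \<or> i = 1 \<or> i = 2 \<or> i = 3 \<or> i = 4 \<or> i = 5" by auto
    then show "((!) cs i, (!) cs (Suc i mod 6)) \<in> ?E" using e1 e2 e3 e4 e5 e6 by (auto simp: cs_def)
  qed
  then show ?thesis unfolding connected_def S by (rule cyc_conn)
qed

definition S3 :: "nat \<Rightarrow> nat list set" where
  "S3 a = {[a,a,0],[0,a,a],[a,0,a]}"

lemma rearr3: "rearrangements [a,a,0] = S3 a"
  unfolding rearrangements_def S3_def mset3 by auto

lemma asep_bal3:
  assumes "1 \<le> a" "0 \<le> t"
  shows "bal (S3 a) (ASEP_w t) (\<lambda>_. 1)"
  using assms unfolding bal_def S3_def
  by (simp add: sum_diff1 ASEP3 swap3 field_simps)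

lemma asep_conn3:
  assumes "1 \<le> a" "0 \<le> t"
  shows "connected (S3 a) (ASEP_w t)"
proof -
  define cs where "cs = [[a,a,0],[0,a,a],[a,0,a]]"
  let ?E = "edges (S3 a) (ASEP_w t)"
  have S: "S3 a = (!) cs ` {..<3}"
  proof -
    have "{..<3::nat} = {0,1,2}" by auto
    then show ?thesis by (simp add: S3_def cs_def)
  qed
  have e1: "([a,a,0],[0,a,a]) \<in> ?E" by (rule edgeI[where w="ASEP_w t", OF _ _ _ aw_s3]) (use assms in \<open>auto simp: S3_def\<close>)
  have e2: "([0,a,a],[a,0,a]) \<in> ?E" by (rule edgeI[where w="ASEP_w t", OF _ _ _ aw_s1]) (use assms in \<open>auto simp: S3_def\<close>)
  have e3: "([a,0,a],[a,a,0]) \<in> ?E" by (rule edgeI[where w="ASEP_w t", OF _ _ _ aw_s2]) (use assms in \<open>auto simp: S3_def\<close>)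
  have "\<forall>i<3. ((!) cs i, (!) cs (Suc i mod 3)) \<in> ?E"
  proof (intro allI impI)
    fix i :: nat assume "i < 3"
    then have "i = 0 \<or> i = 1 \<or> i = 2" by auto
    then show "((!) cs i, (!) cs (Suc i mod 3)) \<in> ?E" using e1 e2 e3 by (auto simp: cs_def)
  qed
  then show ?thesis unfolding connected_def S by (rule cyc_conn)
qed


lemma le9_1: "0 \<le> a1 \<Longrightarrow> 0 \<le> a2 \<Longrightarrow> 0 \<le> a3 \<Longrightarrow> 0 \<le> a4 \<Longrightarrow> 0 \<le> a5 \<Longrightarrow> 0 \<le> a6 \<Longrightarrow> 0 \<le> a7 \<Longrightarrow> 0 \<le> a8 \<Longrightarrow> 0 \<le> a9 \<Longrightarrow> a1 \<le> a1+a2+a3+a4+a5+a6+a7+a8+(a9::real)" by linarith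
lemma le9_2: "0 \<le> a1 \<Longrightarrow> 0 \<le> a2 \<Longrightarrow> 0 \<le> a3 \<Longrightarrow> 0 \<le> a4 \<Longrightarrow> 0 \<le> a5 \<Longrightarrow> 0 \<le> a6 \<Longrightarrow> 0 \<le> a7 \<Longrightarrow> 0 \<le> a8 \<Longrightarrow> 0 \<le> a9 \<Longrightarrow> a2 \<le> a1+a2+a3+a4+a5+a6+a7+a8+(a9::real)" by linarith
lemma le9_3: "0 \<le> a1 \<Longrightarrow> 0 \<le> a2 \<Longrightarrow> 0 \<le> a3 \<Longrightarrow> 0 \<le> a4 \<Longrightarrow> 0 \<le> a5 \<Longrightarrow> 0 \<le> a6 \<Longrightarrow> 0 \<le> a7 \<Longrightarrow> 0 \<le> a8 \<Longrightarrow> 0 \<le> a9 \<Longrightarrow> a3 \<le> a1+a2+a3+a4+a5+a6+a7+a8+(a9::real)" by linarith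
lemma le9_4: "0 \<le> a1 \<Longrightarrow> 0 \<le> a2 \<Longrightarrow> 0 \<le> a3 \<Longrightarrow> 0 \<le> a4 \<Longrightarrow> 0 \<le> a5 \<Longrightarrow> 0 \<le> a6 \<Longrightarrow> 0 \<le> a7 \<Longrightarrow> 0 \<le> a8 \<Longrightarrow> 0 \<le> a9 \<Longrightarrow> a4 \<le> a1+a2+a3+a4+a5+a6+a7+a8+(a9::real)" by linarith
lemma le9_5: "0 \<le> a1 \<Longrightarrow> 0 \<le> a2 \<Longrightarrow> 0 \<le> a3 \<Longrightarrow> 0 \<le> a4 \<Longrightarrow> 0 \<le> a5 \<Longrightarrow> 0 \<le> a6 \<Longrightarrow> 0 \<le> a7 \<Longrightarrow> 0 \<le> a8 \<Longrightarrow> 0 \<le> a9 \<Longrightarrow> a5 \<le> a1+a2+a3+a4+a5+a6+a7+a8+(a9::real)" by linarith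
lemma le9_6: "0 \<le> a1 \<Longrightarrow> 0 \<le> a2 \<Longrightarrow> 0 \<le> a3 \<Longrightarrow> 0 \<le> a4 \<Longrightarrow> 0 \<le> a5 \<Longrightarrow> 0 \<le> a6 \<Longrightarrow> 0 \<le> a7 \<Longrightarrow> 0 \<le> a8 \<Longrightarrow> 0 \<le> a9 \<Longrightarrow> a6 \<le> a1+a2+a3+a4+a5+a6+a7+a8+(a9::real)" by linarith
lemma le9_7: "0 \<le> a1 \<Longrightarrow> 0 \<le> a2 \<Longrightarrow> 0 \<le> a3 \<Longrightarrow> 0 \<le> a4 \<Longrightarrow> 0 \<le> a5 \<Longrightarrow> 0 \<le> a6 \<Longrightarrow> 0 \<le> a7 \<Longrightarrow> 0 \<le> a8 \<Longrightarrow> 0 \<le> a9 \<Longrightarrow> a7 \<le> a1+a2+a3+a4+a5+a6+a7+a8+(a9::real)" by linarith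
lemma le9_8: "0 \<le> a1 \<Longrightarrow> 0 \<le> a2 \<Longrightarrow> 0 \<le> a3 \<Longrightarrow> 0 \<le> a4 \<Longrightarrow> 0 \<le> a5 \<Longrightarrow> 0 \<le> a6 \<Longrightarrow> 0 \<le> a7 \<Longrightarrow> 0 \<le> a8 \<Longrightarrow> 0 \<le> a9 \<Longrightarrow> a8 \<le> a1+a2+a3+a4+a5+a6+a7+a8+(a9::real)" by linarith
lemma le9_9: "0 \<le> a1 \<Longrightarrow> 0 \<le> a2 \<Longrightarrow> 0 \<le> a3 \<Longrightarrow> 0 \<le> a4 \<Longrightarrow> 0 \<le> a5 \<Longrightarrow> 0 \<le> a6 \<Longrightarrow> 0 \<le> a7 \<Longrightarrow> 0 \<le> a8 \<Longrightarrow> 0 \<le> a9 \<Longrightarrow> a9 \<le> a1+a2+a3+a4+a5+a6+a7+a8+(a9::real)" by linarith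
lemma dterm_s1: assumes "0 \<le> t" "0 \<le> u" shows "(if x0 \<noteq> x1 \<and> y = [x1,x0,x2] then (if x0 > x1 then t/9 else 1/9) else 0) \<le> DASEP_w p t u [x0,x1,x2] y"
  unfolding DASEP3 swap3 by (rule le9_1) (use assms in simp_all)
lemma dterm_s2: assumes "0 \<le> t" "0 \<le> u" shows "(if x1 \<noteq> x2 \<and> y = [x0,x2,x1] then (if x1 > x2 then t/9 else 1/9) else 0) \<le> DASEP_w p t u [x0,x1,x2] y"
  unfolding DASEP3 swap3 by (rule le9_2) (use assms in simp_all)
lemma dterm_s3: assumes "0 \<le> t" "0 \<le> u" shows "(if x0 \<noteq> x2 \<and> y = [x2,x1,x0] then (if x2 > x0 then t/9 else 1/9) else 0) \<le> DASEP_w p t u [x0,x1,x2] y"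
  unfolding DASEP3 swap3 by (rule le9_3) (use assms in simp_all)
lemma dterm_i0: assumes "0 \<le> t" "0 \<le> u" shows "(if (1 \<le> x0 \<and> x0 \<le> p - 1) \<and> y = [Suc x0,x1,x2] then u/9 else 0) \<le> DASEP_w p t u [x0,x1,x2] y"
  unfolding DASEP3 swap3 by (rule le9_4) (use assms in simp_all)
lemma dterm_d0: assumes "0 \<le> t" "0 \<le> u" shows "(if 2 \<le> x0 \<and> y = [x0 - 1,x1,x2] then 1/9 else 0) \<le> DASEP_w p t u [x0,x1,x2] y"
  unfolding DASEP3 swap3 by (rule le9_5) (use assms in simp_all)
lemma dterm_i1: assumes "0 \<le> t" "0 \<le> u" shows "(if (1 \<le> x1 \<and> x1 \<le> p - 1) \<and> y = [x0,Suc x1,x2] then u/9 else 0) \<le> DASEP_w p t u [x0,x1,x2] y"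
  unfolding DASEP3 swap3 by (rule le9_6) (use assms in simp_all)
lemma dterm_d1: assumes "0 \<le> t" "0 \<le> u" shows "(if 2 \<le> x1 \<and> y = [x0,x1 - 1,x2] then 1/9 else 0) \<le> DASEP_w p t u [x0,x1,x2] y"
  unfolding DASEP3 swap3 by (rule le9_7) (use assms in simp_all)
lemma dterm_i2: assumes "0 \<le> t" "0 \<le> u" shows "(if (1 \<le> x2 \<and> x2 \<le> p - 1) \<and> y = [x0,x1,Suc x2] then u/9 else 0) \<le> DASEP_w p t u [x0,x1,x2] y"
  unfolding DASEP3 swap3 by (rule le9_8) (use assms in simp_all)
lemma dterm_d2: assumes "0 \<le> t" "0 \<le> u" shows "(if 2 \<le> x2 \<and> y = [x0,x1,x2 - 1] then 1/9 else 0) \<le> DASEP_w p t u [x0,x1,x2] y"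
  unfolding DASEP3 swap3 by (rule le9_9) (use assms in simp_all)

lemma dasep_nonneg:
  assumes "0 \<le> t" "0 \<le> u" "length x = 3"
  shows "0 \<le> DASEP_w p t u x y"
proof -
  obtain x0 x1 x2 where x: "x = [x0,x1,x2]" using len3[OF assms(3)] by blast
  have "(if 2 \<le> x0 \<and> y = [x0 - 1,x1,x2] then 1/9 else 0) \<le> DASEP_w p t u [x0,x1,x2] y"
    by (rule dterm_d0[OF assms(1,2)])
  moreover have "0 \<le> (if 2 \<le> x0 \<and> y = [x0 - 1,x1,x2] then 1/9 else (0::real))" by simp
  ultimately show ?thesis unfolding x by linarith
qed

lemma dasep_nonneg_DS: "0 \<le> t \<Longrightarrow> 0 \<le> u \<Longrightarrow> nonneg (DS p) (DASEP_w p t u)"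
  unfolding nonneg_def by (auto simp: DASEP_states_def intro!: dasep_nonneg)


lemma dec_edge0: "[x0,x1,x2] \<in> DS p \<Longrightarrow> 2 \<le> x0 \<Longrightarrow> 0 \<le> t \<Longrightarrow> 0 \<le> u \<Longrightarrow> ([x0,x1,x2],[x0-1,x1,x2]) \<in> edges (DS p) (DASEP_w p t u)"
  by (rule edgeI[where S="DS p" and w="DASEP_w p t u", OF _ _ _ dterm_d0[of t u x0 "[x0-1,x1,x2]" x1 x2 p]]) (auto simp: mem3)
lemma dec_edge1: "[x0,x1,x2] \<in> DS p \<Longrightarrow> 2 \<le> x1 \<Longrightarrow> 0 \<le> t \<Longrightarrow> 0 \<le> u \<Longrightarrow> ([x0,x1,x2],[x0,x1-1,x2]) \<in> edges (DS p) (DASEP_w p t u)"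
  by (rule edgeI[where S="DS p" and w="DASEP_w p t u", OF _ _ _ dterm_d1[of t u x1 "[x0,x1-1,x2]" x0 x2 p]]) (auto simp: mem3)
lemma dec_edge2: "[x0,x1,x2] \<in> DS p \<Longrightarrow> 2 \<le> x2 \<Longrightarrow> 0 \<le> t \<Longrightarrow> 0 \<le> u \<Longrightarrow> ([x0,x1,x2],[x0,x1,x2-1]) \<in> edges (DS p) (DASEP_w p t u)"
  by (rule edgeI[where S="DS p" and w="DASEP_w p t u", OF _ _ _ dterm_d2[of t u x2 "[x0,x1,x2-1]" x0 x1 p]]) (auto simp: mem3)
lemma inc_edge0: "[x0,x1,x2] \<in> DS p \<Longrightarrow> 1 \<le> x0 \<Longrightarrow> x0 < p \<Longrightarrow> 0 \<le> t \<Longrightarrow> 0 < u \<Longrightarrow> ([x0,x1,x2],[Suc x0,x1,x2]) \<in> edges (DS p) (DASEP_w p t u)"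
  by (rule edgeI[where S="DS p" and w="DASEP_w p t u", OF _ _ _ dterm_i0[of t u x0 p "[Suc x0,x1,x2]" x1 x2]]) (auto simp: mem3)
lemma inc_edge1: "[x0,x1,x2] \<in> DS p \<Longrightarrow> 1 \<le> x1 \<Longrightarrow> x1 < p \<Longrightarrow> 0 \<le> t \<Longrightarrow> 0 < u \<Longrightarrow> ([x0,x1,x2],[x0,Suc x1,x2]) \<in> edges (DS p) (DASEP_w p t u)"
  by (rule edgeI[where S="DS p" and w="DASEP_w p t u", OF _ _ _ dterm_i1[of t u x1 p "[x0,Suc x1,x2]" x0 x2]]) (auto simp: mem3)
lemma inc_edge2: "[x0,x1,x2] \<in> DS p \<Longrightarrow> 1 \<le> x2 \<Longrightarrow> x2 < p \<Longrightarrow> 0 \<le> t \<Longrightarrow> 0 < u \<Longrightarrow> ([x0,x1,x2],[x0,x1,Suc x2]) \<in> edges (DS p) (DASEP_w p t u)"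
  by (rule edgeI[where S="DS p" and w="DASEP_w p t u", OF _ _ _ dterm_i2[of t u x2 p "[x0,x1,Suc x2]" x0 x1]]) (auto simp: mem3)

lemma sw_a: "1 \<le> p \<Longrightarrow> 0 \<le> t \<Longrightarrow> 0 \<le> u \<Longrightarrow> ([1,0,1],[1,1,0]) \<in> edges (DS p) (DASEP_w p t u)"
  by (rule edgeI[where S="DS p" and w="DASEP_w p t u", OF _ _ _ dterm_s2[of t u 0 1 "[1,1,0]" 1 p]]) (auto simp: mem3)
lemma sw_b: "1 \<le> p \<Longrightarrow> 0 \<le> t \<Longrightarrow> 0 \<le> u \<Longrightarrow> ([0,1,1],[1,0,1]) \<in> edges (DS p) (DASEP_w p t u)"
  by (rule edgeI[where S="DS p" and w="DASEP_w p t u", OF _ _ _ dterm_s1[of t u 0 1 "[1,0,1]" 1 p]]) (auto simp: mem3)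
lemma sw_c: "1 \<le> p \<Longrightarrow> 0 \<le> t \<Longrightarrow> 0 \<le> u \<Longrightarrow> ([1,1,0],[0,1,1]) \<in> edges (DS p) (DASEP_w p t u)"
  by (rule edgeI[where S="DS p" and w="DASEP_w p t u", OF _ _ _ dterm_s3[of t u 1 0 "[0,1,1]" 1 p]]) (auto simp: mem3)

lemma to_hub:
  assumes "1 \<le> p" "0 \<le> t" "0 < u"
  shows "x \<in> DS p \<Longrightarrow> (x,[1,1,0]) \<in> (edges (DS p) (DASEP_w p t u))\<^sup>*"
proof (induction "sum_list x" arbitrary: x rule: less_induct)
  case less
  let ?E = "edges (DS p) (DASEP_w p t u)"
  obtain x0 x1 x2 where x: "x = [x0,x1,x2]" using DS_form less.prems by blast
  have m: "[x0,x1,x2] \<in> DS p" using less.prems x by simp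
  have u0: "0 \<le> u" using assms by simp
  show ?case
  proof (cases "2 \<le> x0")
    case True
    have e: "([x0,x1,x2],[x0-1,x1,x2]) \<in> ?E" by (rule dec_edge0[OF m True assms(2) u0])
    have m': "[x0-1,x1,x2] \<in> DS p" using e by (simp add: edges_def)
    have "([x0-1,x1,x2],[1,1,0]) \<in> ?E\<^sup>*" using less.hyps[of "[x0-1,x1,x2]"] m' True x by simp
    then show ?thesis using e x by (simp add: converse_rtrancl_into_rtrancl)
  next
    case F0: False
    show ?thesis
    proof (cases "2 \<le> x1")
      case True
      have e: "([x0,x1,x2],[x0,x1-1,x2]) \<in> ?E" by (rule dec_edge1[OF m True assms(2) u0])
      have m': "[x0,x1-1,x2] \<in> DS p" using e by (simp add: edges_def)
      have "([x0,x1-1,x2],[1,1,0]) \<in> ?E\<^sup>*" using less.hyps[of "[x0,x1-1,x2]"] m' True x by simp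
      then show ?thesis using e x by (simp add: converse_rtrancl_into_rtrancl)
    next
      case F1: False
      show ?thesis
      proof (cases "2 \<le> x2")
        case True
        have e: "([x0,x1,x2],[x0,x1,x2-1]) \<in> ?E" by (rule dec_edge2[OF m True assms(2) u0])
        have m': "[x0,x1,x2-1] \<in> DS p" using e by (simp add: edges_def)
        have "([x0,x1,x2-1],[1,1,0]) \<in> ?E\<^sup>*" using less.hyps[of "[x0,x1,x2-1]"] m' True x by simp
        then show ?thesis using e x by (simp add: converse_rtrancl_into_rtrancl)
      next
        case F2: False
        have "x = [1,1,0] \<or> x = [1,0,1] \<or> x = [0,1,1]" using F0 F1 F2 m x by (auto simp: mem3)
        moreover have "([1,0,1],[1,1,0]) \<in> ?E" by (rule sw_a[OF assms(1,2) u0])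
        moreover have "([0,1,1],[1,0,1]) \<in> ?E" by (rule sw_b[OF assms(1,2) u0])
        ultimately show ?thesis by (meson converse_rtrancl_into_rtrancl r_into_rtrancl rtrancl.rtrancl_refl)
      qed
    qed
  qed
qed

lemma from_hub:
  assumes "1 \<le> p" "0 \<le> t" "0 < u"
  shows "x \<in> DS p \<Longrightarrow> ([1,1,0],x) \<in> (edges (DS p) (DASEP_w p t u))\<^sup>*"
proof (induction "sum_list x" arbitrary: x rule: less_induct)
  case less
  let ?E = "edges (DS p) (DASEP_w p t u)"
  obtain x0 x1 x2 where x: "x = [x0,x1,x2]" using DS_form less.prems by blast
  have m: "[x0,x1,x2] \<in> DS p" using less.prems x by simp
  have u0: "0 \<le> u" using assms by simp
  show ?case
  proof (cases "2 \<le> x0")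
    case True
    have m': "[x0-1,x1,x2] \<in> DS p" using m True by (auto simp: mem3)
    have e: "([x0-1,x1,x2],[Suc (x0-1),x1,x2]) \<in> ?E" by (rule inc_edge0[OF m' _ _ assms(2,3)]) (use True m in \<open>auto simp: mem3\<close>)
    have "([1,1,0],[x0-1,x1,x2]) \<in> ?E\<^sup>*" using less.hyps[of "[x0-1,x1,x2]"] m' True x by simp
    then show ?thesis using e x True by (simp add: rtrancl_into_rtrancl)
  next
    case F0: False
    show ?thesis
    proof (cases "2 \<le> x1")
      case True
      have m': "[x0,x1-1,x2] \<in> DS p" using m True by (auto simp: mem3)
      have e: "([x0,x1-1,x2],[x0,Suc (x1-1),x2]) \<in> ?E" by (rule inc_edge1[OF m' _ _ assms(2,3)]) (use True m in \<open>auto simp: mem3\<close>)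
      have "([1,1,0],[x0,x1-1,x2]) \<in> ?E\<^sup>*" using less.hyps[of "[x0,x1-1,x2]"] m' True x by simp
      then show ?thesis using e x True by (simp add: rtrancl_into_rtrancl)
    next
      case F1: False
      show ?thesis
      proof (cases "2 \<le> x2")
        case True
        have m': "[x0,x1,x2-1] \<in> DS p" using m True by (auto simp: mem3)
        have e: "([x0,x1,x2-1],[x0,x1,Suc (x2-1)]) \<in> ?E" by (rule inc_edge2[OF m' _ _ assms(2,3)]) (use True m in \<open>auto simp: mem3\<close>)
        have "([1,1,0],[x0,x1,x2-1]) \<in> ?E\<^sup>*" using less.hyps[of "[x0,x1,x2-1]"] m' True x by simp
        then show ?thesis using e x True by (simp add: rtrancl_into_rtrancl)
      next
        case F2: False
        have "x = [1,1,0] \<or> x = [1,0,1] \<or> x = [0,1,1]" using F0 F1 F2 m x by (auto simp: mem3)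
        moreover have "([1,1,0],[0,1,1]) \<in> ?E" by (rule sw_c[OF assms(1,2) u0])
        moreover have "([0,1,1],[1,0,1]) \<in> ?E" by (rule sw_b[OF assms(1,2) u0])
        ultimately show ?thesis by (meson converse_rtrancl_into_rtrancl r_into_rtrancl rtrancl.rtrancl_refl)
      qed
    qed
  qed
qed

lemma dasep_conn:
  assumes "1 \<le> p" "0 \<le> t" "0 < u"
  shows "connected (DS p) (DASEP_w p t u)"
  unfolding connected_def using to_hub[OF assms] from_hub[OF assms] by (meson rtrancl_trans)


lemma E_s1:
  assumes "[x0,x1,x2] \<in> DS p" "[y0,y1,y2] \<in> DS p"
  shows "(u::real) ^ (x0+x1+x2) * (if x0 \<noteq> x1 \<and> [y0,y1,y2] = [x1,x0,x2] then (if x0 > x1 then 1/9 else 1/9) else 0) = u ^ (y0+y1+y2) * (if y0 \<noteq> y1 \<and> [x0,x1,x2] = [y1,y0,y2] then (if y0 > y1 then 1/9 else 1/9) else 0)"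
    using assms by (auto simp: add_ac)
lemma E_s2:
  assumes "[x0,x1,x2] \<in> DS p" "[y0,y1,y2] \<in> DS p"
  shows "(u::real) ^ (x0+x1+x2) * (if x1 \<noteq> x2 \<and> [y0,y1,y2] = [x0,x2,x1] then (if x1 > x2 then 1/9 else 1/9) else 0) = u ^ (y0+y1+y2) * (if y1 \<noteq> y2 \<and> [x0,x1,x2] = [y0,y2,y1] then (if y1 > y2 then 1/9 else 1/9) else 0)"
    using assms by (auto simp: add_ac)
lemma E_s3:
  assumes "[x0,x1,x2] \<in> DS p" "[y0,y1,y2] \<in> DS p"
  shows "(u::real) ^ (x0+x1+x2) * (if x0 \<noteq> x2 \<and> [y0,y1,y2] = [x2,x1,x0] then (if x2 > x0 then 1/9 else 1/9) else 0) = u ^ (y0+y1+y2) * (if y0 \<noteq> y2 \<and> [x0,x1,x2] = [y2,y1,y0] then (if y2 > y0 then 1/9 else 1/9) else 0)"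
    using assms by (auto simp: add_ac)
lemma E_i0:
  assumes "[x0,x1,x2] \<in> DS p" "[y0,y1,y2] \<in> DS p"
  shows "(u::real) ^ (x0+x1+x2) * (if (1 \<le> x0 \<and> x0 \<le> p - 1) \<and> [y0,y1,y2] = [Suc x0,x1,x2] then u/9 else 0) = u ^ (y0+y1+y2) * (if 2 \<le> y0 \<and> [x0,x1,x2] = [y0 - 1,y1,y2] then 1/9 else 0)"
  proof (cases "(1 \<le> x0 \<and> x0 \<le> p - 1) \<and> [y0,y1,y2] = [Suc x0,x1,x2]")
    case True
    then show ?thesis by (simp add: algebra_simps)
  next
    case False
    have ny: "\<not> (2 \<le> y0 \<and> [x0,x1,x2] = [y0 - 1,y1,y2])" using False assms by (auto simp: mem3)
    show ?thesis by (simp only: if_not_P[OF False] if_not_P[OF ny] mult_zero_right)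
  qed
lemma E_d0:
  assumes "[x0,x1,x2] \<in> DS p" "[y0,y1,y2] \<in> DS p"
  shows "(u::real) ^ (x0+x1+x2) * (if 2 \<le> x0 \<and> [y0,y1,y2] = [x0 - 1,x1,x2] then 1/9 else 0) = u ^ (y0+y1+y2) * (if (1 \<le> y0 \<and> y0 \<le> p - 1) \<and> [x0,x1,x2] = [Suc y0,y1,y2] then u/9 else 0)"
  proof (cases "2 \<le> x0 \<and> [y0,y1,y2] = [x0 - 1,x1,x2]")
    case True
    then obtain k where k: "x0 = Suc k" by (cases "x0") auto
    have "1 \<le> k \<and> k \<le> p - 1" using True k assms(1) by (auto simp: mem3)
    then show ?thesis using True k by (simp add: algebra_simps)
  next
    case False
    have ny: "\<not> ((1 \<le> y0 \<and> y0 \<le> p - 1) \<and> [x0,x1,x2] = [Suc y0,y1,y2])" using False assms by (auto simp: mem3)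
    show ?thesis by (simp only: if_not_P[OF False] if_not_P[OF ny] mult_zero_right)
  qed
lemma E_i1:
  assumes "[x0,x1,x2] \<in> DS p" "[y0,y1,y2] \<in> DS p"
  shows "(u::real) ^ (x0+x1+x2) * (if (1 \<le> x1 \<and> x1 \<le> p - 1) \<and> [y0,y1,y2] = [x0,Suc x1,x2] then u/9 else 0) = u ^ (y0+y1+y2) * (if 2 \<le> y1 \<and> [x0,x1,x2] = [y0,y1 - 1,y2] then 1/9 else 0)"
  proof (cases "(1 \<le> x1 \<and> x1 \<le> p - 1) \<and> [y0,y1,y2] = [x0,Suc x1,x2]")
    case True
    then show ?thesis by (simp add: algebra_simps)
  next
    case False
    have ny: "\<not> (2 \<le> y1 \<and> [x0,x1,x2] = [y0,y1 - 1,y2])" using False assms by (auto simp: mem3)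
    show ?thesis by (simp only: if_not_P[OF False] if_not_P[OF ny] mult_zero_right)
  qed
lemma E_d1:
  assumes "[x0,x1,x2] \<in> DS p" "[y0,y1,y2] \<in> DS p"
  shows "(u::real) ^ (x0+x1+x2) * (if 2 \<le> x1 \<and> [y0,y1,y2] = [x0,x1 - 1,x2] then 1/9 else 0) = u ^ (y0+y1+y2) * (if (1 \<le> y1 \<and> y1 \<le> p - 1) \<and> [x0,x1,x2] = [y0,Suc y1,y2] then u/9 else 0)"
  proof (cases "2 \<le> x1 \<and> [y0,y1,y2] = [x0,x1 - 1,x2]")
    case True
    then obtain k where k: "x1 = Suc k" by (cases "x1") auto
    have "1 \<le> k \<and> k \<le> p - 1" using True k assms(1) by (auto simp: mem3)
    then show ?thesis using True k by (simp add: algebra_simps)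
  next
    case False
    have ny: "\<not> ((1 \<le> y1 \<and> y1 \<le> p - 1) \<and> [x0,x1,x2] = [y0,Suc y1,y2])" using False assms by (auto simp: mem3)
    show ?thesis by (simp only: if_not_P[OF False] if_not_P[OF ny] mult_zero_right)
  qed
lemma E_i2:
  assumes "[x0,x1,x2] \<in> DS p" "[y0,y1,y2] \<in> DS p"
  shows "(u::real) ^ (x0+x1+x2) * (if (1 \<le> x2 \<and> x2 \<le> p - 1) \<and> [y0,y1,y2] = [x0,x1,Suc x2] then u/9 else 0) = u ^ (y0+y1+y2) * (if 2 \<le> y2 \<and> [x0,x1,x2] = [y0,y1,y2 - 1] then 1/9 else 0)"
  proof (cases "(1 \<le> x2 \<and> x2 \<le> p - 1) \<and> [y0,y1,y2] = [x0,x1,Suc x2]")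
    case True
    then show ?thesis by (simp add: algebra_simps)
  next
    case False
    have ny: "\<not> (2 \<le> y2 \<and> [x0,x1,x2] = [y0,y1,y2 - 1])" using False assms by (auto simp: mem3)
    show ?thesis by (simp only: if_not_P[OF False] if_not_P[OF ny] mult_zero_right)
  qed
lemma E_d2:
  assumes "[x0,x1,x2] \<in> DS p" "[y0,y1,y2] \<in> DS p"
  shows "(u::real) ^ (x0+x1+x2) * (if 2 \<le> x2 \<and> [y0,y1,y2] = [x0,x1,x2 - 1] then 1/9 else 0) = u ^ (y0+y1+y2) * (if (1 \<le> y2 \<and> y2 \<le> p - 1) \<and> [x0,x1,x2] = [y0,y1,Suc y2] then u/9 else 0)"
  proof (cases "2 \<le> x2 \<and> [y0,y1,y2] = [x0,x1,x2 - 1]")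
    case True
    then obtain k where k: "x2 = Suc k" by (cases "x2") auto
    have "1 \<le> k \<and> k \<le> p - 1" using True k assms(1) by (auto simp: mem3)
    then show ?thesis using True k by (simp add: algebra_simps)
  next
    case False
    have ny: "\<not> ((1 \<le> y2 \<and> y2 \<le> p - 1) \<and> [x0,x1,x2] = [y0,y1,Suc y2])" using False assms by (auto simp: mem3)
    show ?thesis by (simp only: if_not_P[OF False] if_not_P[OF ny] mult_zero_right)
  qed

lemma perm9: "a1+a2+a3+b+a+d+c+f+e = a1+a2+a3+a+b+c+d+e+(f::real)"
  by (simp add: ac_simps)

lemma db_dasep:
  assumes "[x0,x1,x2] \<in> DS p" "[y0,y1,y2] \<in> DS p"
  shows "u ^ (x0+x1+x2) * DASEP_w p 1 u [x0,x1,x2] [y0,y1,y2] = u ^ (y0+y1+y2) * DASEP_w p 1 u [y0,y1,y2] [x0,x1,x2]"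
    apply (unfold DASEP3 swap3 distrib_left)
    apply (unfold E_s1[OF assms] E_s2[OF assms] E_s3[OF assms] E_i0[OF assms] E_d0[OF assms] E_i1[OF assms] E_d1[OF assms] E_i2[OF assms] E_d2[OF assms])
    apply (rule perm9)
    done


lemma db_bal:
  assumes "\<forall>x\<in>S. \<forall>y\<in>S. \<pi> x * w x y = \<pi> y * w y x"
  shows "bal S w \<pi>"
  unfolding bal_def
proof
  fix y assume y: "y \<in> S"
  have "(\<Sum>x\<in>S-{y}. \<pi> x * w x y) = (\<Sum>x\<in>S-{y}. \<pi> y * w y x)"
    using assms y by (intro sum.cong refl) auto
  then show "(\<Sum>x\<in>S-{y}. \<pi> x * w x y) = \<pi> y * (\<Sum>z\<in>S-{y}. w y z)"
    by (simp add: sum_distrib_left)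
qed

lemma DS_ne: "1 \<le> p \<Longrightarrow> DS p \<noteq> {}"
  using mem3[of 1 1 0 p] by auto

lemma Pd_t1:
  assumes "1 \<le> p" "0 < u"
  shows "DASEP_Pd 3 p 2 1 u = (\<lambda>x. if x \<in> DS p then u ^ sum_list x / (\<Sum>y\<in>DS p. u ^ sum_list y) else 0)"
proof -
  have b: "bal (DS p) (DASEP_w p 1 u) (\<lambda>x. u ^ sum_list x)"
  proof (rule db_bal, intro ballI)
    fix x y assume x: "x \<in> DS p" and y: "y \<in> DS p"
    obtain x0 x1 x2 where xx: "x = [x0,x1,x2]" using DS_form[OF x] by blast
    obtain y0 y1 y2 where yy: "y = [y0,y1,y2]" using DS_form[OF y] by blast
    show "u ^ sum_list x * DASEP_w p 1 u x y = u ^ sum_list y * DASEP_w p 1 u y x"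
      using db_dasep[of x0 x1 x2 p y0 y1 y2 u] x y unfolding xx yy by (simp add: add.assoc)
  qed
  show ?thesis unfolding DASEP_Pd_def
    by (rule norm_bal[OF DS_finite dasep_nonneg_DS dasep_conn _ b DS_ne]) (use assms in auto)
qed

lemma part3:
  assumes "is_partition 3 lam" "num_nonzero lam = 2"
  shows "\<exists>a b. lam = [a,b,0] \<and> b \<le> a \<and> 1 \<le> b"
proof -
  have "length lam = 3" using assms(1) by (simp add: is_partition_def)
  then obtain l0 l1 l2 where l: "lam = [l0,l1,l2]" using len3 by blast
  have "l2 \<le> l1" "l1 \<le> l0" using assms(1) unfolding l is_partition_def by auto
  moreover have "l2 = 0 \<and> l1 \<noteq> 0" using assms(2) \<open>l2 \<le> l1\<close> \<open>l1 \<le> l0\<close> unfolding l num_nonzero_def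
    by (auto split: if_splits)
  ultimately show ?thesis using l by auto
qed

lemma rearr_DS:
  assumes "\<mu> \<in> rearrangements [a,b,0]" "b \<le> a" "1 \<le> b" "a \<le> p"
  shows "\<mu> \<in> DS p \<and> sum_list \<mu> = a + b"
  using assms unfolding rearrangements_def mset3 by (auto simp: mem3)

lemma asep_nonneg6: "0 \<le> t \<Longrightarrow> nonneg (S6 a b) (ASEP_w t)"
  unfolding nonneg_def by (auto intro!: asep_nonneg S6_len)

lemma asep_nonneg3: "0 \<le> t \<Longrightarrow> nonneg (S3 a) (ASEP_w t)"
  unfolding nonneg_def S3_def by (auto intro!: asep_nonneg)

lemma asep6:
  assumes "b < a" "1 \<le> b" "0 \<le> t"
  shows "ASEP_Pr t [a,b,0] = (\<lambda>x. if x \<in> S6 a b then piA t a b x / sum (piA t a b) (S6 a b) else 0)"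
  unfolding ASEP_Pr_def rearr6
proof (rule norm_bal)
  show "finite (S6 a b)" by (simp add: S6_def)
  show "nonneg (S6 a b) (ASEP_w t)" by (rule asep_nonneg6[OF assms(3)])
  show "connected (S6 a b) (ASEP_w t)" by (rule asep_conn6[OF assms])
  show "\<forall>x\<in>S6 a b. 0 < piA t a b x" using assms by (simp add: piA_def)
  show "bal (S6 a b) (ASEP_w t) (piA t a b)" by (rule asep_bal6[OF assms])
  show "S6 a b \<noteq> {}" by (simp add: S6_def)
qed

lemma asep3:
  assumes "1 \<le> a" "0 \<le> t"
  shows "ASEP_Pr t [a,a,0] = (\<lambda>x. if x \<in> S3 a then 1 / sum (\<lambda>_. 1) (S3 a) else 0)"
  unfolding ASEP_Pr_def rearr3
proof (rule norm_bal)
  show "finite (S3 a)" by (simp add: S3_def)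
  show "nonneg (S3 a) (ASEP_w t)" by (rule asep_nonneg3[OF assms(2)])
  show "connected (S3 a) (ASEP_w t)" by (rule asep_conn3[OF assms])
  show "\<forall>x\<in>S3 a. 0 < (1::real)" by simp
  show "bal (S3 a) (ASEP_w t) (\<lambda>_. 1)" by (rule asep_bal3[OF assms])
  show "S3 a \<noteq> {}" by (simp add: S3_def)
qed

lemma A_form:
  assumes "x \<in> DS p" "FF x = 1"
  shows "\<exists>a b. b < a \<and> 1 \<le> b \<and> a \<le> p \<and> (x = [a,b,0] \<or> x = [b,0,a] \<or> x = [0,a,b])"
proof -
  obtain x0 x1 x2 where xx: "x = [x0,x1,x2]" using DS_form[OF assms(1)] by blast
  have m: "x0 \<le> p \<and> x1 \<le> p \<and> x2 \<le> p \<and>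
   ((x0 = 0 \<and> x1 \<noteq> 0 \<and> x2 \<noteq> 0) \<or> (x0 \<noteq> 0 \<and> x1 = 0 \<and> x2 \<noteq> 0) \<or> (x0 \<noteq> 0 \<and> x1 \<noteq> 0 \<and> x2 = 0))"
    using assms(1) xx mem3 by simp
  have f: "fs x0 x1 + fs x1 x2 + fs x2 x0 = 1" using assms(2) xx by (simp add: FF_def)
  show ?thesis
  proof (cases "x2 = 0")
    case True
    then have "x1 < x0" "1 \<le> x1" using m f by (auto simp: fs_def split: if_splits)
    then show ?thesis using m True xx by blast
  next
    case F2: False
    show ?thesis
    proof (cases "x1 = 0")
      case True
      then have "x0 < x2" "1 \<le> x0" using m f F2 by (auto simp: fs_def split: if_splits)
      then show ?thesis using m True xx by blast
    next
      case False
      then have "x0 = 0" using m F2 by auto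
      then have "x2 < x1" "1 \<le> x2" using m f F2 False by (auto simp: fs_def split: if_splits)
      then show ?thesis using m \<open>x0 = 0\<close> xx by blast
    qed
  qed
qed


theorem mainTheorem6:
  fixes p :: nat and t u :: real
  assumes "2 \<le> p" and "0 \<le> t" and "t \<le> 1" and "0 < u"
  shows "t = 1 \<longleftrightarrow>
    (\<forall>lam. is_partition 3 lam \<and> lam ! 0 \<le> p \<and> num_nonzero lam = 2 \<longrightarrow>
       (\<forall>\<mu>\<in>rearrangements lam. \<forall>\<nu>\<in>rearrangements lam.
          ASEP_Pr t lam \<mu> / ASEP_Pr t lam \<nu> = DASEP_Pd 3 p 2 t u \<mu> / DASEP_Pd 3 p 2 t u \<nu>))"
proof
  assume t1: "t = 1"
  show "\<forall>lam. is_partition 3 lam \<and> lam ! 0 \<le> p \<and> num_nonzero lam = 2 \<longrightarrow>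
       (\<forall>\<mu>\<in>rearrangements lam. \<forall>\<nu>\<in>rearrangements lam.
          ASEP_Pr t lam \<mu> / ASEP_Pr t lam \<nu> = DASEP_Pd 3 p 2 t u \<mu> / DASEP_Pd 3 p 2 t u \<nu>)"
  proof (intro allI impI ballI)
    fix lam \<mu> \<nu>
    assume H: "is_partition 3 lam \<and> lam ! 0 \<le> p \<and> num_nonzero lam = 2"
      and m: "\<mu> \<in> rearrangements lam" and n: "\<nu> \<in> rearrangements lam"
    obtain a b where lam: "lam = [a,b,0]" "b \<le> a" "1 \<le> b" using part3 H by blast
    have ap: "a \<le> p" using H lam by simp
    have dm: "\<mu> \<in> DS p \<and> sum_list \<mu> = a + b" using rearr_DS m lam ap by simp
    have dn: "\<nu> \<in> DS p \<and> sum_list \<nu> = a + b" using rearr_DS n lam ap by simp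
    have p1: "1 \<le> p" using assms by simp
    define Z where "Z = (\<Sum>y\<in>DS p. u ^ sum_list y)"
    have Zp: "Z > 0" unfolding Z_def using DS_finite DS_ne[OF p1] assms(4) by (intro sum_pos) auto
    have Pd: "DASEP_Pd 3 p 2 t u \<mu> = u ^ (a+b) / Z" "DASEP_Pd 3 p 2 t u \<nu> = u ^ (a+b) / Z"
      using Pd_t1[OF p1 assms(4)] dm dn t1 by (simp_all add: Z_def)
    have Pdnz: "u ^ (a+b) / Z \<noteq> 0" using Zp assms(4) by simp
    have As: "ASEP_Pr t lam \<mu> = ASEP_Pr t lam \<nu> \<and> ASEP_Pr t lam \<mu> \<noteq> 0"
    proof (cases "b < a")
      case True
      have e: "ASEP_Pr t lam = (\<lambda>x. if x \<in> S6 a b then piA t a b x / sum (piA t a b) (S6 a b) else 0)"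
        using asep6[OF True lam(3) assms(2)] lam by simp
      have ms: "\<mu> \<in> S6 a b" "\<nu> \<in> S6 a b" using m n lam rearr6 by auto
      have pc: "\<And>x. piA t a b x = 3" using t1 by (simp add: piA_def)
      have "sum (piA t a b) (S6 a b) > 0" using pc ms(1) by (intro sum_pos) (auto simp: S6_def)
      then show ?thesis using e ms pc by simp
    next
      case False
      then have ab: "b = a" using lam by simp
      have e: "ASEP_Pr t lam = (\<lambda>x. if x \<in> S3 a then 1 / sum (\<lambda>_. 1) (S3 a) else 0)"
        using asep3[of a t] lam ab assms(2) by simp
      have ms: "\<mu> \<in> S3 a" "\<nu> \<in> S3 a" using m n lam ab rearr3 by auto
      have "sum (\<lambda>_. 1::real) (S3 a) > 0" using ms(1) by (intro sum_pos) (auto simp: S3_def)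
      then show ?thesis using e ms by simp
    qed
    show "ASEP_Pr t lam \<mu> / ASEP_Pr t lam \<nu> = DASEP_Pd 3 p 2 t u \<mu> / DASEP_Pd 3 p 2 t u \<nu>"
      using As Pd Pdnz by simp
  qed
next
  assume H: "\<forall>lam. is_partition 3 lam \<and> lam ! 0 \<le> p \<and> num_nonzero lam = 2 \<longrightarrow>
       (\<forall>\<mu>\<in>rearrangements lam. \<forall>\<nu>\<in>rearrangements lam.
          ASEP_Pr t lam \<mu> / ASEP_Pr t lam \<nu> = DASEP_Pd 3 p 2 t u \<mu> / DASEP_Pd 3 p 2 t u \<nu>)"
  show "t = 1"
  proof (rule ccontr)
    assume "t \<noteq> 1"
    then have tl: "t < 1" using assms(3) by simp
    have p1: "1 \<le> p" using assms by simp
    let ?\<pi> = "DASEP_Pd 3 p 2 t u"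
    have SD: "is_stationary (DS p) (DASEP_w p t u) ?\<pi> \<and> (\<forall>x\<in>DS p. ?\<pi> x > 0)"
      unfolding DASEP_Pd_def
      by (rule stat_dist_exists[OF DS_finite DS_ne[OF p1] dasep_nonneg_DS dasep_conn[OF p1 assms(2,4)]])
        (use assms in auto)
    then have b: "bal (DS p) (DASEP_w p t u) ?\<pi>" and pos: "\<forall>x\<in>DS p. ?\<pi> x > 0"
      using stat_iff[OF DS_finite] by auto
    have rel: "\<forall>x\<in>DS p. FF x = 1 \<longrightarrow> ?\<pi> (rev x) = (1 + 2*t) / (2 + t) * ?\<pi> x"
    proof (intro ballI impI)
      fix x assume x: "x \<in> DS p" and f: "FF x = 1"
      obtain a b where ab: "b < a" "1 \<le> b" "a \<le> p" "x = [a,b,0] \<or> x = [b,0,a] \<or> x = [0,a,b]"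
        using A_form[OF x f] by blast
      define lam where "lam = [a,b,0]"
      have lamP: "is_partition 3 lam \<and> lam ! 0 \<le> p \<and> num_nonzero lam = 2"
        using ab by (simp add: lam_def is_partition_def num_nonzero_def)
      have xs: "x \<in> S6 a b" "rev x \<in> S6 a b" using ab by (auto simp: S6_def)
      have xr: "x \<in> rearrangements lam" "rev x \<in> rearrangements lam" using xs by (simp_all add: lam_def rearr6)
      have eq: "ASEP_Pr t lam (rev x) / ASEP_Pr t lam x = ?\<pi> (rev x) / ?\<pi> x"
        using H lamP xr by blast
      have pA: "piA t a b x = 2 + t" "piA t a b (rev x) = 1 + 2*t" using ab by (auto simp: piA_def)
      define Z where "Z = sum (piA t a b) (S6 a b)"
      have Zp: "Z > 0" unfolding Z_def using xs(1) assms(2) by (intro sum_pos) (auto simp: S6_def piA_def)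
      have As: "ASEP_Pr t lam x = (2 + t) / Z" "ASEP_Pr t lam (rev x) = (1 + 2*t) / Z"
        using asep6[OF ab(1,2) assms(2)] xs pA by (simp_all add: lam_def Z_def)
      have "ASEP_Pr t lam (rev x) / ASEP_Pr t lam x = (1 + 2*t) / (2 + t)"
      proof -
        have "(1 + 2*t) / Z / ((2 + t) / Z) = ((1 + 2*t) / Z) * (Z / (2 + t))" by simp
        also have "\<dots> = (1 + 2*t) / (2 + t)" using Zp by simp
        finally show ?thesis unfolding As .
      qed
      then have e: "?\<pi> (rev x) / ?\<pi> x = (1 + 2*t) / (2 + t)" using eq by simp
      have px: "?\<pi> x \<noteq> 0" using pos x by force
      show "?\<pi> (rev x) = (1 + 2*t) / (2 + t) * ?\<pi> x"
        by (rule iffD1[OF nonzero_divide_eq_eq[OF px] e])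
    qed
    show False by (rule contra[OF assms(1,2) tl assms(4) b pos rel])
  qed
qed

end
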